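(* Let $(\mathcal{A},\mathbf{m})$ be a multiarrangement in $\mathbb{Q}^l$ with $\mathcal{A}=\{H_1,\dots,H_n\}$, $H_i=\alpha_i^{-1}(0)$, where the $\alpha_i\in S_\mathbb{Z}=\mathbb{Z}[x_1,\dots,x_l]$ are linear forms such that no prime number divides any $\alpha_i$. Let $p$ be a good prime for $(\mathcal{A},\mathbf{m})$ that is not a zero divisor of $\operatorname{coker}(\varphi_\mathbb{Z})$. If $(\mathcal{A}_p,\mathbf{m})$ is free in $\mathbb{F}_p^l$ with exponents $(e_1,\dots,e_l)$, then $(\mathcal{A},\mathbf{m})$ is free in $\mathbb{Q}^l$ with exponents $(e_1,\dots,e_l)$.
   Context: For a field $\mathbb{K}$ and $R=\mathbb{K}[x_1,\dots,x_l]$, a multiarrangement with hyperplanes $\beta_i^{-1}(0)$ and multiplicities $\mathbf{m}_i\ge0$ has $D=\{\delta=\sum_j f_j\partial_{x_j}: f_j\in R,\ \delta(\beta_i)\in\beta_i^{\mathbf{m}_i}R\ \forall i\}$; it is free with exponents $(e_1,\dots,e_l)$ if $D$ is a free $R$-module with a basis of homogeneous derivations of polynomial degrees $e_1,\dots,e_l$. Let $\pi_p\colon S_\mathbb{Z}\to\mathbb{F}_p[x_1,\dots,x_l]$ be reduction mod $p$. A prime $p$ is good if $\pi_p(\alpha_i)\ne\pi_p(\alpha_j)$ for $i\ne j$; then $(\mathcal{A}_p,\mathbf{m})$ is the multiarrangement in $\mathbb{F}_p^l$ with hyperplanes $\pi_p(\alpha_i)^{-1}(0)$ of multiplicities $\mathbf{m}(H_i)$.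 Let $M(\mathcal{A},\mathbf{m})\subseteq S_\mathbb{Z}^n$ be generated by $\alpha_i^{\mathbf{m}(H_i)}e_i$, $A(\mathcal{A})=(\partial\alpha_i/\partial x_j)_{i,j}$, and $\varphi_\mathbb{Z}\colon S_\mathbb{Z}^l\to S_\mathbb{Z}^n/M(\mathcal{A},\mathbf{m})$, $g\mapsto A(\mathcal{A})g$. $p$ is a zero divisor of an $S_\mathbb{Z}$-module $N$ if $pv=0$ for some nonzero $v\in N$. *)

theory Defs
  imports "HOL-Library.Poly_Mapping" "Berlekamp_Zassenhaus.Finite_Field"
begin

text \<open>The polynomial ring
  K[x_1,...,x_l] is the subset of those polynomials that only involve variables
  with index < l (variable x_(j+1) is indexed j).\<close>

type_synonym 'k mpoly = "((nat, nat) poly_mapping, 'k) poly_mapping"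

definition mpoly_in :: "nat \<Rightarrow> 'k::zero mpoly \<Rightarrow> bool" where
  "mpoly_in l f \<longleftrightarrow> (\<forall>mm\<in>Poly_Mapping.keys f. \<forall>j\<in>Poly_Mapping.keys mm. j < l)"

definition mconst :: "'k::zero \<Rightarrow> 'k mpoly" where
  "mconst c = Poly_Mapping.single 0 c"

definition mdeg :: "(nat \<Rightarrow>\<^sub>0 nat) \<Rightarrow> nat" where
  "mdeg mm = (\<Sum>j\<in>Poly_Mapping.keys mm. Poly_Mapping.lookup mm j)"

text \<open>The linear form sum_(k<l) c_k x_k with integer coefficients c, viewed in 'k[x]
  via the canonical map Z -> 'k (for 'k = F_p this is reduction mod p).\<close>
definition lin_form :: "nat \<Rightarrow> (nat \<Rightarrow> int) \<Rightarrow> 'k::comm_ring_1 mpoly" where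
  "lin_form l c = (\<Sum>k<l. Poly_Mapping.single (Poly_Mapping.single k 1) (of_int (c k)))"

text \<open>A derivation sum_j f_j d/dx_j on K[x_1..x_l], given by its coefficient tuple.\<close>
definition is_der :: "nat \<Rightarrow> (nat \<Rightarrow> 'k::zero mpoly) \<Rightarrow> bool" where
  "is_der l \<delta> \<longleftrightarrow> (\<forall>j<l. mpoly_in l (\<delta> j)) \<and> (\<forall>j\<ge>l. \<delta> j = 0)"

definition der_apply :: "nat \<Rightarrow> (nat \<Rightarrow> 'k::comm_ring_1 mpoly) \<Rightarrow> (nat \<Rightarrow> int) \<Rightarrow> 'k mpoly" where
  "der_apply l \<delta> c = (\<Sum>j<l. mconst (of_int (c j)) * \<delta> j)"

text \<open>The module D(A,m) of logarithmic derivations of the multiarrangement with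
  hyperplanes given by the linear forms alpha_i (coefficients a i), i < n, multiplicities m i.\<close>
definition Dmod :: "nat \<Rightarrow> nat \<Rightarrow> (nat \<Rightarrow> nat \<Rightarrow> int) \<Rightarrow> (nat \<Rightarrow> nat)
    \<Rightarrow> (nat \<Rightarrow> 'k::comm_ring_1 mpoly) set" where
  "Dmod l n a m = {\<delta>. is_der l \<delta> \<and>
     (\<forall>i<n. \<exists>q. mpoly_in l q \<and> der_apply l \<delta> (a i) = lin_form l (a i) ^ m i * q)}"

definition homog_der :: "nat \<Rightarrow> (nat \<Rightarrow> 'k::zero mpoly) \<Rightarrow> bool" where
  "homog_der d \<delta> \<longleftrightarrow> (\<forall>j. \<forall>mm\<in>Poly_Mapping.keys (\<delta> j). mdeg mm = d)"

definition free_with_exponents :: "nat \<Rightarrow> (nat \<Rightarrow> 'k::comm_ring_1 mpoly) set \<Rightarrow> (nat \<Rightarrow> nat) \<Rightarrow> bool" where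
  "free_with_exponents l D e \<longleftrightarrow>
     (\<exists>B :: nat \<Rightarrow> nat \<Rightarrow> 'k mpoly.
        (\<forall>s<l. B s \<in> D \<and> homog_der (e s) (B s)) \<and>
        (\<forall>\<delta>\<in>D. \<exists>!g. (\<forall>s<l. mpoly_in l (g s)) \<and> (\<forall>s\<ge>l. g s = 0) \<and>
                       \<delta> = (\<lambda>j. \<Sum>s<l. g s * B s j)))"

text \<open>Membership of v in S_Z^n in the submodule M(A,m) + image(A(A)), i.e. v is zero
  in coker(phi_Z) = S_Z^n / (M(A,m) + A(A) S_Z^l).\<close>
definition in_M_plus_image :: "nat \<Rightarrow> nat \<Rightarrow> (nat \<Rightarrow> nat \<Rightarrow> int) \<Rightarrow> (nat \<Rightarrow> nat)
    \<Rightarrow> (nat \<Rightarrow> int mpoly) \<Rightarrow> bool" where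
  "in_M_plus_image l n a m v \<longleftrightarrow>
     (\<exists>g q. (\<forall>j<l. mpoly_in l (g j)) \<and>
        (\<forall>i<n. mpoly_in l (q i) \<and>
           v i = (\<Sum>j<l. mconst (a i j) * g j) + lin_form l (a i) ^ m i * q i))"

definition coker_zero_divisor :: "nat \<Rightarrow> nat \<Rightarrow> (nat \<Rightarrow> nat \<Rightarrow> int) \<Rightarrow> (nat \<Rightarrow> nat) \<Rightarrow> int \<Rightarrow> bool" where
  "coker_zero_divisor l n a m p \<longleftrightarrow>
     (\<exists>v. (\<forall>i<n. mpoly_in l (v i)) \<and> \<not> in_M_plus_image l n a m v \<and>
          in_M_plus_image l n a m (\<lambda>i. mconst p * v i))"

text \<open>The hyperplane alpha^(-1)(0) in Q^l (vectors: functions vanishing at indices >= l).\<close>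
definition hyperplane_Q :: "nat \<Rightarrow> (nat \<Rightarrow> int) \<Rightarrow> (nat \<Rightarrow> rat) set" where
  "hyperplane_Q l c = {x. (\<forall>k\<ge>l. x k = 0) \<and> (\<Sum>k<l. of_int (c k) * x k) = 0}"

end

theory Submission
  imports Defs "HOL-Library.Function_Algebras"
begin

definition sc :: "rat \<Rightarrow> ('c \<Rightarrow> rat) \<Rightarrow> ('c \<Rightarrow> rat)" where "sc c v = (\<lambda>x. c * v x)"
lemma vs_sc: "vector_space (sc :: rat \<Rightarrow> ('c \<Rightarrow> rat) \<Rightarrow> _)"
  by unfold_locales (auto simp: sc_def algebra_simps)
lemma md_sc: "Modules.module (sc :: rat \<Rightarrow> ('c \<Rightarrow> rat) \<Rightarrow> _)"
  by unfold_locales (auto simp: sc_def algebra_simps)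
lemma sc_zero: "sc 0 v = 0" by (auto simp: sc_def)
lemma vs_rat: "vector_space ((*) :: rat \<Rightarrow> rat \<Rightarrow> rat)"
  by unfold_locales (auto simp: algebra_simps)
lemma vsp: "vector_space_pair (sc :: rat \<Rightarrow> ('c \<Rightarrow> rat) \<Rightarrow> _) ((*) :: rat \<Rightarrow> rat \<Rightarrow> rat)"
  unfolding vector_space_pair_def using vs_sc vs_rat by blast

lemma fun_sum_apply: "(\<Sum>y\<in>J. (F y :: 'c \<Rightarrow> 'b::comm_monoid_add)) x = (\<Sum>y\<in>J. F y x)"
  by (induct J rule: infinite_finite_induct) auto

lemma rat_common_denom:
  fixes r :: "'i \<Rightarrow> rat"
  assumes "finite I"
  shows "\<exists>N::int. N > 0 \<and> (\<forall>i\<in>I. of_int N * r i \<in> \<int>)"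
  using assms
proof (induct I rule: finite_induct)
  case empty then show ?case by (intro exI[of _ 1]) auto
next
  case (insert i I)
  then obtain N where N: "N > 0" "\<forall>i\<in>I. of_int N * r i \<in> \<int>" by blast
  obtain a b where ab: "quotient_of (r i) = (a, b)" by (cases "quotient_of (r i)")
  have b: "b > 0" "r i = of_int a / of_int b" using ab quotient_of_denom_pos quotient_of_div by blast+
  have 1: "of_int (N * b) * r i \<in> \<int>" using b by (simp add: field_simps)
  have 2: "of_int (N * b) * r j \<in> \<int>" if "j \<in> I" for j
  proof -
    have "of_int (N * b) * r j = of_int b * (of_int N * r j)" by simp
    moreover have "of_int N * r j \<in> \<int>" using N that by auto
    ultimately show ?thesis by (metis Ints_mult Ints_of_int)
  qed
  show ?case using 1 2 N b by (intro exI[of _ "N * b"]) auto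
qed

lemma LA:
  fixes f :: "'j \<Rightarrow> ('c \<Rightarrow> rat)" and I :: "'c set" and \<delta> :: "'c \<Rightarrow> rat" and P :: int
  assumes fin: "finite J" "finite I" and P: "P \<ge> 2"
    and approx: "\<And>k::nat. \<exists>c \<epsilon>. (\<forall>x. \<epsilon> x \<in> \<int>) \<and> (\<forall>x. x \<notin> I \<longrightarrow> \<epsilon> x = 0) \<and>
         \<delta> = (\<lambda>x. (\<Sum>y\<in>J. c y * f y x) + of_int (P^k) * \<epsilon> x)"
  shows "\<exists>c. \<delta> = (\<lambda>x. \<Sum>y\<in>J. c y * f y x)"
proof (rule ccontr)
  assume nin: "\<nexists>c. \<delta> = (\<lambda>x. \<Sum>y\<in>J. c y * f y x)"
  let ?W = "f ` J"
  have lincomb: "(\<lambda>x. \<Sum>y\<in>J. c y * f y x) = (\<Sum>y\<in>J. sc (c y) (f y))" for c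
    by (rule ext) (simp add: fun_sum_apply sc_def)
  have spanW: "module.span sc ?W = range (\<lambda>c. \<Sum>y\<in>J. sc (c y) (f y))"
  proof
    show "module.span sc ?W \<subseteq> range (\<lambda>c. \<Sum>y\<in>J. sc (c y) (f y))"
    proof (rule module.span_minimal[OF md_sc])
      show "?W \<subseteq> range (\<lambda>c. \<Sum>y\<in>J. sc (c y) (f y))"
      proof
        fix v assume "v \<in> ?W"
        then obtain y0 where y0: "y0 \<in> J" "v = f y0" by auto
        have "(\<Sum>y\<in>J. sc (if y = y0 then 1 else 0) (f y)) = (\<Sum>y\<in>J. if y = y0 then f y else 0)"
          by (rule sum.cong) (auto simp: sc_def)
        also have "\<dots> = f y0" using y0 fin by (simp add: sum.delta)
        finally have "v = (\<Sum>y\<in>J. sc (if y = y0 then 1 else 0) (f y))" using y0 by simp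
        then show "v \<in> range (\<lambda>c. \<Sum>y\<in>J. sc (c y) (f y))"
          by (rule range_eqI[of _ _ "\<lambda>y. if y = y0 then 1 else 0"])
      qed
      show "module.subspace sc (range (\<lambda>c. \<Sum>y\<in>J. sc (c y) (f y)))"
        unfolding module.subspace_def[OF md_sc]
      proof (intro conjI allI ballI impI)
        show "0 \<in> range (\<lambda>c. \<Sum>y\<in>J. sc (c y) (f y))"
          by (rule range_eqI[of _ _ "\<lambda>_. 0"]) (simp add: sc_zero)
        fix u v assume "u \<in> range (\<lambda>c. \<Sum>y\<in>J. sc (c y) (f y))" "v \<in> range (\<lambda>c. \<Sum>y\<in>J. sc (c y) (f y))"
        then obtain cu cv where "u = (\<Sum>y\<in>J. sc (cu y) (f y))" "v = (\<Sum>y\<in>J. sc (cv y) (f y))" by auto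
        then have "u + v = (\<Sum>y\<in>J. sc (cu y + cv y) (f y))"
          by (auto simp: sc_def fun_sum_apply sum.distrib algebra_simps intro!: ext)
        then show "u + v \<in> range (\<lambda>c. \<Sum>y\<in>J. sc (c y) (f y))" by auto
      next
        fix r :: rat and u assume "u \<in> range (\<lambda>c. \<Sum>y\<in>J. sc (c y) (f y))"
        then obtain cu where "u = (\<Sum>y\<in>J. sc (cu y) (f y))" by auto
        then have "sc r u = (\<Sum>y\<in>J. sc (r * cu y) (f y))"
          by (auto simp: sc_def fun_sum_apply sum_distrib_left algebra_simps)
        then show "sc r u \<in> range (\<lambda>c. \<Sum>y\<in>J. sc (c y) (f y))" by auto
      qed
    qed
  next
    show "range (\<lambda>c. \<Sum>y\<in>J. sc (c y) (f y)) \<subseteq> module.span sc ?W"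
    proof (rule subsetI)
      fix v assume "v \<in> range (\<lambda>c. \<Sum>y\<in>J. sc (c y) (f y))"
      then obtain c where v: "v = (\<Sum>y\<in>J. sc (c y) (f y))" by auto
      have "sc (c y) (f y) \<in> module.span sc ?W" if "y \<in> J" for y
        using that by (intro module.span_scale[OF md_sc] module.span_base[OF md_sc]) auto
      then show "v \<in> module.span sc ?W" unfolding v by (intro module.span_sum[OF md_sc])
    qed
  qed
  have dW: "\<delta> \<notin> module.span sc ?W" using nin unfolding spanW lincomb by auto
  obtain B where B: "B \<subseteq> ?W" "\<not> module.dependent sc B" "?W \<subseteq> module.span sc B"
    by (rule vector_space.maximal_independent_subset[OF vs_sc])
  have sB: "module.span sc B \<subseteq> module.span sc ?W"
    using B(1) by (rule module.span_mono[OF md_sc])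
  have dB: "\<delta> \<notin> module.span sc B" using dW sB by auto
  have indep: "\<not> module.dependent sc (insert \<delta> B)"
    using B(2) dB vector_space.independent_insert[OF vs_sc, of \<delta> B]
    module.span_base[OF md_sc, of \<delta> B] by auto
  obtain g where g: "Vector_Spaces.linear sc (*) g" "\<forall>x\<in>insert \<delta> B. g x = (if x = \<delta> then 1 else 0)"
    using vector_space_pair.linear_independent_extend[OF vsp indep, of "\<lambda>x. if x = \<delta> then 1 else 0"] by blast
  have gd: "g \<delta> = 1" using g by auto
  have g0B: "g x = 0" if "x \<in> B" for x
  proof -
    have "x \<noteq> \<delta>" using dB that module.span_base[OF md_sc, of x B] by blast
    then show ?thesis using g(2) that by auto
  qed
  have g0span: "g x = 0" if "x \<in> module.span sc B" for x
    using vector_space_pair.linear_eq_0_on_span[OF vsp g(1) g0B that] .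
  have gW: "g (\<Sum>y\<in>J. sc (c y) (f y)) = 0" for c
  proof -
    have "(\<Sum>y\<in>J. sc (c y) (f y)) \<in> module.span sc ?W" using spanW by auto
    then have "(\<Sum>y\<in>J. sc (c y) (f y)) \<in> module.span sc B"
      using B(3) module.span_mono[OF md_sc, of ?W "module.span sc B"]
        module.span_span[OF md_sc, of B] by auto
    then show ?thesis by (rule g0span)
  qed
  define e :: "'c \<Rightarrow> 'c \<Rightarrow> rat" where "e i = (\<lambda>x. if x = i then 1 else 0)" for i
  obtain N where N: "N > 0" "\<forall>i\<in>I. of_int N * g (e i) \<in> \<int>"
    using rat_common_denom[OF fin(2), of "\<lambda>i. g (e i)"] by blast
  have gint: "of_int N * g \<epsilon> \<in> \<int>" if "\<forall>x. \<epsilon> x \<in> \<int>" "\<forall>x. x \<notin> I \<longrightarrow> \<epsilon> x = 0" for \<epsilon>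
  proof -
    have dec: "\<epsilon> = (\<Sum>i\<in>I. sc (\<epsilon> i) (e i))"
    proof (rule ext)
      fix x
      have "(\<Sum>i\<in>I. sc (\<epsilon> i) (e i)) x = (\<Sum>i\<in>I. if x = i then \<epsilon> i else 0)"
        by (simp add: fun_sum_apply sc_def e_def) (rule sum.cong, auto)
      also have "\<dots> = (if x \<in> I then \<epsilon> x else 0)" using fin by (simp add: sum.delta)
      also have "\<dots> = \<epsilon> x" using that by auto
      finally show "\<epsilon> x = (\<Sum>i\<in>I. sc (\<epsilon> i) (e i)) x" by simp
    qed
    have "g \<epsilon> = g (\<Sum>i\<in>I. sc (\<epsilon> i) (e i))" using dec by (rule arg_cong)
    also have "\<dots> = (\<Sum>i\<in>I. \<epsilon> i * g (e i))"
      by (simp add: vector_space_pair.linear_sum[OF vsp g(1)] vector_space_pair.linear_scale[OF vsp g(1)])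
    finally have "of_int N * g \<epsilon> = (\<Sum>i\<in>I. \<epsilon> i * (of_int N * g (e i)))"
      by (simp add: sum_distrib_left algebra_simps)
    also have "\<dots> \<in> \<int>"
    proof (rule Ints_sum)
      fix i assume "i \<in> I"
      then show "\<epsilon> i * (of_int N * g (e i)) \<in> \<int>" using N that Ints_mult by blast
    qed
    finally show ?thesis .
  qed
  obtain c \<epsilon> where ce: "\<forall>x. \<epsilon> x \<in> \<int>" "\<forall>x. x \<notin> I \<longrightarrow> \<epsilon> x = 0"
    "\<delta> = (\<lambda>x. (\<Sum>y\<in>J. c y * f y x) + of_int (P ^ nat N) * \<epsilon> x)"
    using approx[of "nat N"] by blast
  have "\<delta> = (\<Sum>y\<in>J. sc (c y) (f y)) + sc (of_int (P ^ nat N)) \<epsilon>"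
    unfolding ce(3) by (rule ext) (simp add: sc_def fun_sum_apply)
  then have "g \<delta> = of_int (P ^ nat N) * g \<epsilon>"
    by (simp add: vector_space_pair.linear_add[OF vsp g(1)] vector_space_pair.linear_scale[OF vsp g(1)] gW)
  then have "of_int N = of_int (P ^ nat N) * (of_int N * g \<epsilon>)" using gd by (simp add: algebra_simps)
  moreover obtain z where z: "of_int N * g \<epsilon> = of_int z" using gint[OF ce(1,2)] by (auto elim: Ints_cases)
  ultimately have "N = P ^ nat N * z" by (metis of_int_eq_iff of_int_mult)
  moreover have Pp: "P ^ nat N > 0" using P by simp
  ultimately have "z > 0" using N(1) by (metis zero_less_mult_pos)
  then have "P ^ nat N * 1 \<le> P ^ nat N * z" using Pp by (intro mult_left_mono) auto
  then have "P ^ nat N \<le> N" using \<open>N = P ^ nat N * z\<close> by simp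
  moreover have "int (nat N) < 2 ^ nat N"
  proof -
    have "int (nat N) < int (2 ^ nat N)" using less_exp[of "nat N"] by (simp only: of_nat_less_iff)
    then show ?thesis by simp
  qed
  moreover have "(2::int) ^ nat N \<le> P ^ nat N" using P by (simp add: power_mono)
  ultimately show False using N by simp
qed


lemma mdeg_superset:
  assumes "finite S" "Poly_Mapping.keys mm \<subseteq> S"
  shows "mdeg mm = (\<Sum>j\<in>S. Poly_Mapping.lookup mm j)"
  unfolding mdeg_def using assms
  by (intro sum.mono_neutral_left) (auto simp: in_keys_iff)

lemma mdeg_add: "mdeg (u + v) = mdeg u + mdeg v"
proof -
  let ?S = "Poly_Mapping.keys u \<union> Poly_Mapping.keys v"
  have "mdeg (u + v) = (\<Sum>j\<in>?S. Poly_Mapping.lookup (u + v) j)"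
    using keys_add[of u v] by (intro mdeg_superset) auto
  also have "\<dots> = (\<Sum>j\<in>?S. Poly_Mapping.lookup u j) + (\<Sum>j\<in>?S. Poly_Mapping.lookup v j)"
    by (simp add: lookup_add sum.distrib)
  also have "\<dots> = mdeg u + mdeg v"
    by (subst (1 2) mdeg_superset[where S = ?S]) auto
  finally show ?thesis .
qed

lemma mdeg_zero [simp]: "mdeg 0 = 0"
  by (simp add: mdeg_def)

lemma mdeg_single [simp]: "mdeg (Poly_Mapping.single k n) = n"
  by (simp add: mdeg_def)

lemma lookup_le_mdeg: "Poly_Mapping.lookup mm j \<le> mdeg mm"
proof (cases "j \<in> Poly_Mapping.keys mm")
  case True
  then show ?thesis unfolding mdeg_def
    by (intro member_le_sum) auto
next
  case False
  then show ?thesis by (simp add: in_keys_iff)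
qed

definition monoms :: "nat \<Rightarrow> nat \<Rightarrow> (nat \<Rightarrow>\<^sub>0 nat) set" where
  "monoms l d = {u. Poly_Mapping.keys u \<subseteq> {..<l} \<and> mdeg u = d}"

lemma finite_monoms: "finite (monoms l d)"
proof -
  have inj: "inj_on Poly_Mapping.lookup (monoms l d)"
    by (intro inj_onI) (metis poly_mapping.lookup_inject)
  let ?F = "{f. \<forall>x. (x \<in> {..<l} \<longrightarrow> f x \<in> {0..d}) \<and> (x \<notin> {..<l} \<longrightarrow> f x = (0::nat))}"
  have sub: "Poly_Mapping.lookup ` monoms l d \<subseteq> ?F"
  proof
    fix f assume "f \<in> Poly_Mapping.lookup ` monoms l d"
    then obtain u where u: "u \<in> monoms l d" "f = Poly_Mapping.lookup u" by blast
    have "f x \<in> {0..d}" for x using u lookup_le_mdeg[of u x] by (simp add: monoms_def)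
    moreover have "f x = 0" if "x \<notin> {..<l}" for x
      using u that unfolding monoms_def by (metis (no_types, lifting) in_keys_iff mem_Collect_eq subsetD)
    ultimately show "f \<in> ?F" by blast
  qed
  have "finite ?F" by (intro finite_set_of_finite_funs) auto
  then have "finite (Poly_Mapping.lookup ` monoms l d)" using sub by (rule finite_subset[rotated])
  then show ?thesis using inj by (rule finite_imageD)
qed

lemma lookup_map0: "h 0 = 0 \<Longrightarrow> Poly_Mapping.lookup (Poly_Mapping.map h f) k = h (Poly_Mapping.lookup f k)"
  by (simp add: map.rep_eq when_def)

lemma keys_map_subset: "Poly_Mapping.keys (Poly_Mapping.map h f) \<subseteq> Poly_Mapping.keys f"
  by (auto simp: in_keys_iff map.rep_eq when_def)

lemma mconst_mult_lookup: "Poly_Mapping.lookup (mconst c * f) k = c * Poly_Mapping.lookup f k"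
  unfolding mconst_def mult_map_scale_conv_mult[symmetric] by (simp add: lookup_map0)

lemma mconst_mult_keys: "Poly_Mapping.keys (mconst c * f) \<subseteq> Poly_Mapping.keys f"
  by (auto simp: in_keys_iff mconst_mult_lookup)

lemma mconst_add: "mconst (a + b) = mconst a + mconst b"
  by (simp add: mconst_def single_add)
lemma mconst_mult: "mconst (a * b) = mconst a * mconst (b::'a::comm_semiring_1)"
  by (simp add: mconst_def mult_single)
lemma mconst_one [simp]: "mconst 1 = 1"
  by (simp add: mconst_def)
lemma mconst_zero [simp]: "mconst 0 = 0"
  by (simp add: mconst_def)

lemma poly_single_sum:
  assumes "finite U" "Poly_Mapping.keys f \<subseteq> U"
  shows "f = (\<Sum>u\<in>U. Poly_Mapping.single u (Poly_Mapping.lookup f u))"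
proof (rule poly_mapping_eqI)
  fix k
  have "Poly_Mapping.lookup (\<Sum>u\<in>U. Poly_Mapping.single u (Poly_Mapping.lookup f u)) k
     = (\<Sum>u\<in>U. if u = k then Poly_Mapping.lookup f u else 0)"
    by (simp add: lookup_sum lookup_single when_def)
  also have "\<dots> = Poly_Mapping.lookup f k"
    using assms by (auto simp: sum.delta in_keys_iff)
  finally show "Poly_Mapping.lookup f k = Poly_Mapping.lookup (\<Sum>u\<in>U. Poly_Mapping.single u (Poly_Mapping.lookup f u)) k" ..
qed

lemma single_mult_split: "Poly_Mapping.single u c * g = mconst c * (Poly_Mapping.single u 1 * (g :: 'a::comm_semiring_1 mpoly))"
  by (simp add: mconst_def mult.assoc[symmetric] mult_single)


section \<open>Homogeneity and homogeneous components\<close>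

definition homog :: "nat \<Rightarrow> 'k::zero mpoly \<Rightarrow> bool" where
  "homog d f \<longleftrightarrow> (\<forall>mm\<in>Poly_Mapping.keys f. mdeg mm = d)"

definition hc :: "nat \<Rightarrow> 'k::zero mpoly \<Rightarrow> 'k mpoly" where
  "hc d f = Abs_poly_mapping (\<lambda>mm. if mdeg mm = d then Poly_Mapping.lookup f mm else 0)"

lemma lookup_hc: "Poly_Mapping.lookup (hc d f) mm = (if mdeg mm = d then Poly_Mapping.lookup f mm else 0)"
proof -
  have "{mm. (if mdeg mm = d then Poly_Mapping.lookup f mm else 0) \<noteq> 0} \<subseteq> Poly_Mapping.keys f"
    by (auto simp: in_keys_iff split: if_splits)
  then have "finite {mm. (if mdeg mm = d then Poly_Mapping.lookup f mm else 0) \<noteq> 0}"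
    using finite_keys finite_subset by blast
  then show ?thesis unfolding hc_def by simp
qed

lemma keys_hc: "Poly_Mapping.keys (hc d f) \<subseteq> Poly_Mapping.keys f"
  by (auto simp: in_keys_iff lookup_hc split: if_splits)

lemma homog_hc: "homog d (hc d f)"
  by (auto simp: homog_def in_keys_iff lookup_hc split: if_splits)

lemma hc_add: "hc d (f + g) = hc d f + hc d (g :: 'k::monoid_add mpoly)"
  by (rule poly_mapping_eqI) (simp add: lookup_hc lookup_add)

lemma hc_minus: "hc d (f - g) = hc d f - hc d (g :: 'k::ab_group_add mpoly)"
  by (rule poly_mapping_eqI) (simp add: lookup_hc lookup_minus)

lemma hc_zero [simp]: "hc d 0 = 0"
  by (rule poly_mapping_eqI) (simp add: lookup_hc)

lemma hc_sum: "hc d (\<Sum>x\<in>A. f x) = (\<Sum>x\<in>A. hc d (f x :: 'k::comm_monoid_add mpoly))"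
  by (induct A rule: infinite_finite_induct) (auto simp: hc_add)

lemma hc_homog: "homog d f \<Longrightarrow> hc d f = f"
  by (rule poly_mapping_eqI) (auto simp: lookup_hc homog_def in_keys_iff)

lemma hc_eq_0: "(\<forall>mm\<in>Poly_Mapping.keys f. mdeg mm \<noteq> d) \<Longrightarrow> hc d f = 0"
  by (rule poly_mapping_eqI) (auto simp: lookup_hc in_keys_iff)

lemma homog_0 [simp]: "homog d 0"
  by (simp add: homog_def)

lemma homog_add: "homog d f \<Longrightarrow> homog d g \<Longrightarrow> homog d (f + g)"
  using keys_add[of f g] by (auto simp: homog_def)

lemma homog_uminus: "homog d f \<Longrightarrow> homog d (- (f :: 'k::ab_group_add mpoly))"
  by (auto simp: homog_def)

lemma homog_diff: "homog d f \<Longrightarrow> homog d g \<Longrightarrow> homog d (f - (g :: 'k::ab_group_add mpoly))"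
  using homog_add[of d f "- g"] homog_uminus[of d g] by simp

lemma homog_sum: "(\<And>x. x \<in> A \<Longrightarrow> homog d (f x)) \<Longrightarrow> homog d (\<Sum>x\<in>A. f x :: 'k::comm_monoid_add mpoly)"
  by (induct A rule: infinite_finite_induct) (auto intro: homog_add)

lemma keys_mult_mdeg:
  assumes "mm \<in> Poly_Mapping.keys (f * g)"
  obtains u v where "u \<in> Poly_Mapping.keys f" "v \<in> Poly_Mapping.keys g" "mm = u + v" "mdeg mm = mdeg u + mdeg v"
  using assms keys_mult[of f g] mdeg_add by blast

lemma homog_mult: "homog a f \<Longrightarrow> homog b g \<Longrightarrow> homog (a + b) (f * (g :: 'k::semiring_0 mpoly))"
proof -
  assume f: "homog a f" and g: "homog b g"
  show ?thesis unfolding homog_def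
  proof
    fix mm assume "mm \<in> Poly_Mapping.keys (f * g)"
    then obtain u v where "u \<in> Poly_Mapping.keys f" "v \<in> Poly_Mapping.keys g" "mdeg mm = mdeg u + mdeg v"
      by (rule keys_mult_mdeg)
    then show "mdeg mm = a + b" using f g by (simp add: homog_def)
  qed
qed

lemma homog_mconst: "homog 0 (mconst c)"
  by (simp add: homog_def mconst_def)

lemma homog_one: "homog 0 (1 :: 'k::{zero_neq_one} mpoly)"
  by (simp add: homog_def)

lemma homog_pow: "homog a f \<Longrightarrow> homog (a * k) (f ^ k :: 'k::comm_semiring_1 mpoly)"
proof (induct k)
  case 0 then show ?case by (simp add: homog_one)
next
  case (Suc k)
  then have "homog (a + a * k) (f * f ^ k)" by (intro homog_mult) auto
  then show ?case by simp
qed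

lemma homog_single: "homog (mdeg u) (Poly_Mapping.single u c)"
  by (simp add: homog_def)

lemma homog_lin_form: "homog 1 (lin_form l c :: 'k::comm_ring_1 mpoly)"
  unfolding lin_form_def
proof (intro homog_sum)
  fix k
  have "homog (mdeg (Poly_Mapping.single k (1::nat))) (Poly_Mapping.single (Poly_Mapping.single k 1) (of_int (c k) :: 'k))"
    by (rule homog_single)
  then show "homog 1 (Poly_Mapping.single (Poly_Mapping.single k 1) (of_int (c k) :: 'k))" by simp
qed

lemma hc_mult_homog:
  assumes f: "homog a f"
  shows "hc d (f * g) = (if a \<le> d then f * hc (d - a) (g :: 'k::comm_ring_1 mpoly) else 0)"
proof (cases "a \<le> d")
  case True
  let ?r = "g - hc (d - a) g"
  have r: "\<forall>v\<in>Poly_Mapping.keys ?r. mdeg v \<noteq> d - a"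
    by (auto simp: in_keys_iff lookup_minus lookup_hc)
  have "\<forall>mm\<in>Poly_Mapping.keys (f * ?r). mdeg mm \<noteq> d"
  proof
    fix mm assume "mm \<in> Poly_Mapping.keys (f * ?r)"
    then obtain u v where "u \<in> Poly_Mapping.keys f" "v \<in> Poly_Mapping.keys ?r" "mdeg mm = mdeg u + mdeg v"
      by (rule keys_mult_mdeg)
    then show "mdeg mm \<noteq> d" using f r True by (auto simp: homog_def)
  qed
  then have 1: "hc d (f * ?r) = 0" by (rule hc_eq_0)
  have "homog (a + (d - a)) (f * hc (d - a) g)" by (intro homog_mult f homog_hc)
  then have 2: "hc d (f * hc (d - a) g) = f * hc (d - a) g" using True by (intro hc_homog) simp
  have "f * g = f * hc (d - a) g + f * ?r" by (simp add: algebra_simps)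
  then have "hc d (f * g) = f * hc (d - a) g" using 1 2 by (simp add: hc_add)
  then show ?thesis using True by simp
next
  case False
  have "\<forall>mm\<in>Poly_Mapping.keys (f * g). mdeg mm \<noteq> d"
  proof
    fix mm assume "mm \<in> Poly_Mapping.keys (f * g)"
    then obtain u v where "u \<in> Poly_Mapping.keys f" "mdeg mm = mdeg u + mdeg v"
      by (rule keys_mult_mdeg)
    then show "mdeg mm \<noteq> d" using f False by (auto simp: homog_def)
  qed
  then show ?thesis using False by (simp add: hc_eq_0)
qed

lemma hc_mult_homog_right:
  assumes "homog a g"
  shows "hc d (f * g) = (if a \<le> d then hc (d - a) f * (g :: 'k::comm_ring_1 mpoly) else 0)"
  using hc_mult_homog[OF assms, of d f] by (simp add: mult.commute)

lemma hc_mconst_mult: "hc d (mconst c * g) = mconst c * hc d (g :: 'k::comm_ring_1 mpoly)"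
  using hc_mult_homog[OF homog_mconst, of d c g] by simp

section \<open>Polynomials in l variables\<close>

lemma mpoly_in_0 [simp]: "mpoly_in l 0"
  by (simp add: mpoly_in_def)

lemma mpoly_in_subset: "mpoly_in l f \<Longrightarrow> Poly_Mapping.keys g \<subseteq> Poly_Mapping.keys f \<Longrightarrow> mpoly_in l g"
  by (auto simp: mpoly_in_def)

lemma mpoly_in_add: "mpoly_in l f \<Longrightarrow> mpoly_in l g \<Longrightarrow> mpoly_in l (f + g)"
  using keys_add[of f g] by (auto simp: mpoly_in_def)

lemma mpoly_in_uminus: "mpoly_in l f \<Longrightarrow> mpoly_in l (- (f :: 'k::ab_group_add mpoly))"
  by (auto simp: mpoly_in_def)

lemma mpoly_in_diff: "mpoly_in l f \<Longrightarrow> mpoly_in l g \<Longrightarrow> mpoly_in l (f - (g :: 'k::ab_group_add mpoly))"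
  using mpoly_in_add[of l f "- g"] mpoly_in_uminus[of l g] by simp

lemma mpoly_in_sum: "(\<And>x. x \<in> A \<Longrightarrow> mpoly_in l (f x)) \<Longrightarrow> mpoly_in l (\<Sum>x\<in>A. f x :: 'k::comm_monoid_add mpoly)"
  by (induct A rule: infinite_finite_induct) (auto intro: mpoly_in_add)

lemma mpoly_in_mult: "mpoly_in l f \<Longrightarrow> mpoly_in l g \<Longrightarrow> mpoly_in l (f * (g :: 'k::semiring_0 mpoly))"
proof -
  assume f: "mpoly_in l f" and g: "mpoly_in l g"
  show ?thesis unfolding mpoly_in_def
  proof (intro ballI)
    fix mm j assume mm: "mm \<in> Poly_Mapping.keys (f * g)" and j: "j \<in> Poly_Mapping.keys mm"
    then obtain u v where uv: "u \<in> Poly_Mapping.keys f" "v \<in> Poly_Mapping.keys g" "mm = u + v"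
      using keys_mult[of f g] by blast
    then have "j \<in> Poly_Mapping.keys u \<union> Poly_Mapping.keys v" using j keys_add[of u v] by auto
    then show "j < l" using f g uv by (auto simp: mpoly_in_def)
  qed
qed

lemma mpoly_in_mconst: "mpoly_in l (mconst c)"
  by (simp add: mpoly_in_def mconst_def)

lemma mpoly_in_one: "mpoly_in l (1 :: 'k::zero_neq_one mpoly)"
  by (simp add: mpoly_in_def)

lemma mpoly_in_pow: "mpoly_in l f \<Longrightarrow> mpoly_in l (f ^ k :: 'k::comm_semiring_1 mpoly)"
proof (induct k)
  case 0 then show ?case by (simp add: mpoly_in_one)
next
  case (Suc k) then show ?case by (simp add: mpoly_in_mult)
qed

lemma mpoly_in_single: "Poly_Mapping.keys u \<subseteq> {..<l} \<Longrightarrow> mpoly_in l (Poly_Mapping.single u c)"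
  unfolding mpoly_in_def by (cases "c = 0") auto

lemma mpoly_in_lin_form: "mpoly_in l (lin_form l c :: 'k::comm_ring_1 mpoly)"
  unfolding lin_form_def by (intro mpoly_in_sum mpoly_in_single) auto

lemma mpoly_in_hc: "mpoly_in l f \<Longrightarrow> mpoly_in l (hc d f)"
  by (erule mpoly_in_subset) (rule keys_hc)

lemma mpoly_in_map: "mpoly_in l f \<Longrightarrow> mpoly_in l (Poly_Mapping.map h f)"
  by (erule mpoly_in_subset) (rule keys_map_subset)


section \<open>The coefficient map from integer polynomials\<close>

definition imap :: "int mpoly \<Rightarrow> 'k::comm_ring_1 mpoly" where
  "imap f = Poly_Mapping.map of_int f"

lemma lookup_imap: "Poly_Mapping.lookup (imap f) k = of_int (Poly_Mapping.lookup f k)"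
  unfolding imap_def by (simp add: lookup_map0)

lemma keys_imap: "Poly_Mapping.keys (imap f) \<subseteq> Poly_Mapping.keys f"
  unfolding imap_def by (rule keys_map_subset)

lemma imap_add: "imap (f + g) = imap f + imap g"
  by (rule poly_mapping_eqI) (simp add: lookup_imap lookup_add)

lemma imap_minus: "imap (f - g) = imap f - imap g"
  by (rule poly_mapping_eqI) (simp add: lookup_imap lookup_minus)

lemma imap_uminus: "imap (- f) = - imap f"
  by (rule poly_mapping_eqI) (simp add: lookup_imap)

lemma imap_zero [simp]: "imap 0 = 0"
  by (rule poly_mapping_eqI) (simp add: lookup_imap)

lemma imap_sum: "imap (\<Sum>x\<in>A. f x) = (\<Sum>x\<in>A. imap (f x))"
  by (induct A rule: infinite_finite_induct) (auto simp: imap_add)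

lemma imap_single: "imap (Poly_Mapping.single u c) = Poly_Mapping.single u (of_int c)"
  by (rule poly_mapping_eqI) (simp add: lookup_imap lookup_single when_def)

lemma imap_mconst: "imap (mconst c) = mconst (of_int c)"
  by (simp add: mconst_def imap_single)

lemma imap_one [simp]: "imap 1 = 1"
  using imap_mconst[of 1] by simp

lemma imap_expand: "imap f = (\<Sum>u\<in>Poly_Mapping.keys f. Poly_Mapping.single u (of_int (Poly_Mapping.lookup f u)))"
proof -
  have "imap f = (\<Sum>u\<in>Poly_Mapping.keys f. Poly_Mapping.single u (Poly_Mapping.lookup (imap f) u))"
    by (rule poly_single_sum) (auto intro: keys_imap[THEN subsetD])
  then show ?thesis by (simp add: lookup_imap)
qed

lemma imap_mult: "imap (f * g) = imap f * imap g"
proof -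
  let ?F = "Poly_Mapping.keys f" and ?G = "Poly_Mapping.keys g"
  have f: "f = (\<Sum>u\<in>?F. Poly_Mapping.single u (Poly_Mapping.lookup f u))"
    by (rule poly_single_sum) auto
  have g: "g = (\<Sum>v\<in>?G. Poly_Mapping.single v (Poly_Mapping.lookup g v))"
    by (rule poly_single_sum) auto
  have "f * g = (\<Sum>u\<in>?F. \<Sum>v\<in>?G. Poly_Mapping.single u (Poly_Mapping.lookup f u) * Poly_Mapping.single v (Poly_Mapping.lookup g v))"
    by (subst f, subst g) (simp add: sum_product)
  then have "imap (f * g) = (\<Sum>u\<in>?F. \<Sum>v\<in>?G. Poly_Mapping.single u (of_int (Poly_Mapping.lookup f u)) * Poly_Mapping.single v (of_int (Poly_Mapping.lookup g v)))"
    by (simp add: imap_sum mult_single imap_single)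
  also have "\<dots> = imap f * imap g"
    by (simp add: imap_expand sum_product)
  finally show ?thesis .
qed

lemma imap_pow: "imap (f ^ k) = imap f ^ k"
  by (induct k) (simp_all add: imap_mult)

lemma imap_lin_form: "imap (lin_form l c) = lin_form l c"
  by (simp add: lin_form_def imap_sum imap_single)

lemma imap_der_apply: "imap (der_apply l \<delta> c) = der_apply l (\<lambda>j. imap (\<delta> j)) c"
  by (simp add: der_apply_def imap_sum imap_mult imap_mconst)

lemma imap_hc: "imap (hc d f) = hc d (imap f)"
  by (rule poly_mapping_eqI) (simp add: lookup_imap lookup_hc)

lemma mpoly_in_imap: "mpoly_in l f \<Longrightarrow> mpoly_in l (imap f)"
  by (erule mpoly_in_subset) (rule keys_imap)

lemma homog_imap: "homog d f \<Longrightarrow> homog d (imap f)"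
  using keys_imap[of f] unfolding homog_def by (meson subsetD)

lemma imap_inj_rat: "(imap f :: rat mpoly) = imap g \<Longrightarrow> f = g"
  by (rule poly_mapping_eqI) (metis lookup_imap of_int_eq_iff)

section \<open>Derivations\<close>

lemma der_apply_add: "der_apply l (\<lambda>j. \<delta>1 j + \<delta>2 j) c = der_apply l \<delta>1 c + der_apply l \<delta>2 c"
  by (simp add: der_apply_def sum.distrib algebra_simps)

lemma der_apply_diff: "der_apply l (\<lambda>j. \<delta>1 j - \<delta>2 j) c = der_apply l \<delta>1 c - der_apply l (\<delta>2 :: nat \<Rightarrow> 'k::comm_ring_1 mpoly) c"
  by (simp add: der_apply_def sum_subtractf algebra_simps)

lemma der_apply_smult: "der_apply l (\<lambda>j. g * \<delta> j) c = g * der_apply l \<delta> c"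
  by (simp add: der_apply_def sum_distrib_left algebra_simps)

lemma der_apply_sum: "der_apply l (\<lambda>j. \<Sum>s\<in>S. F s j) c = (\<Sum>s\<in>S. der_apply l (F s) c)"
  by (simp add: der_apply_def sum_distrib_left sum.swap[of _ S])

lemma der_apply_hc: "der_apply l (\<lambda>j. hc d (\<delta> j)) c = hc d (der_apply l \<delta> (c :: nat \<Rightarrow> int) :: 'k::comm_ring_1 mpoly)"
  by (simp add: der_apply_def hc_sum hc_mconst_mult)

lemma DmodI:
  assumes "\<And>j. j < l \<Longrightarrow> mpoly_in l (\<delta> j)" "\<And>j. j \<ge> l \<Longrightarrow> \<delta> j = 0"
    and "\<And>i. i < n \<Longrightarrow> \<exists>q. mpoly_in l q \<and> der_apply l \<delta> (a i) = lin_form l (a i) ^ m i * q"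
  shows "\<delta> \<in> Dmod l n a m"
  using assms by (auto simp: Dmod_def is_der_def)

lemma DmodD:
  assumes "\<delta> \<in> Dmod l n a m"
  shows "\<And>j. j < l \<Longrightarrow> mpoly_in l (\<delta> j)" "\<And>j. j \<ge> l \<Longrightarrow> \<delta> j = 0"
    and "\<And>i. i < n \<Longrightarrow> \<exists>q. mpoly_in l q \<and> der_apply l \<delta> (a i) = lin_form l (a i) ^ m i * q"
  using assms by (auto simp: Dmod_def is_der_def)

lemma Dmod_zero: "(\<lambda>j. 0) \<in> Dmod l n a m"
  by (rule DmodI) (auto simp: der_apply_def intro!: exI[of _ 0])

lemma Dmod_add:
  assumes "\<delta>1 \<in> Dmod l n a m" "\<delta>2 \<in> Dmod l n a m"
  shows "(\<lambda>j. \<delta>1 j + \<delta>2 j) \<in> Dmod l n a m"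
proof (rule DmodI)
  show "mpoly_in l (\<delta>1 j + \<delta>2 j)" if "j < l" for j using DmodD(1)[OF assms(1) that] DmodD(1)[OF assms(2) that] by (rule mpoly_in_add)
  show "\<delta>1 j + \<delta>2 j = 0" if "j \<ge> l" for j using DmodD(2)[OF assms(1) that] DmodD(2)[OF assms(2) that] by simp
  fix i assume i: "i < n"
  obtain q1 q2 where "mpoly_in l q1" "der_apply l \<delta>1 (a i) = lin_form l (a i) ^ m i * q1"
    "mpoly_in l q2" "der_apply l \<delta>2 (a i) = lin_form l (a i) ^ m i * q2"
    using DmodD(3)[OF assms(1) i] DmodD(3)[OF assms(2) i] by blast
  then show "\<exists>q. mpoly_in l q \<and> der_apply l (\<lambda>j. \<delta>1 j + \<delta>2 j) (a i) = lin_form l (a i) ^ m i * q"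
    by (intro exI[of _ "q1 + q2"]) (simp add: der_apply_add mpoly_in_add algebra_simps)
qed

lemma Dmod_smult:
  assumes "mpoly_in l g" "\<delta> \<in> Dmod l n a m"
  shows "(\<lambda>j. g * \<delta> j) \<in> Dmod l n a m"
proof (rule DmodI)
  show "mpoly_in l (g * \<delta> j)" if "j < l" for j using assms(1) DmodD(1)[OF assms(2) that] by (rule mpoly_in_mult)
  show "g * \<delta> j = 0" if "j \<ge> l" for j using DmodD(2)[OF assms(2) that] by simp
  fix i assume i: "i < n"
  obtain q where "mpoly_in l q" "der_apply l \<delta> (a i) = lin_form l (a i) ^ m i * q"
    using DmodD(3)[OF assms(2) i] by blast
  then show "\<exists>q. mpoly_in l q \<and> der_apply l (\<lambda>j. g * \<delta> j) (a i) = lin_form l (a i) ^ m i * q"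
    using assms(1) by (intro exI[of _ "g * q"]) (simp add: der_apply_smult mpoly_in_mult algebra_simps)
qed

lemma Dmod_uminus:
  assumes "\<delta> \<in> Dmod l n a (m :: nat \<Rightarrow> nat)"
  shows "(\<lambda>j. - \<delta> j :: 'k::comm_ring_1 mpoly) \<in> Dmod l n a m"
proof -
  have e: "mconst (-1) = (-1 :: 'k mpoly)" by (simp add: mconst_def single_uminus)
  show ?thesis using Dmod_smult[OF mpoly_in_mconst[of l "-1"] assms] by (simp add: e)
qed

lemma Dmod_diff:
  assumes "\<delta>1 \<in> Dmod l n a m" "\<delta>2 \<in> Dmod l n a m"
  shows "(\<lambda>j. \<delta>1 j - \<delta>2 j :: 'k::comm_ring_1 mpoly) \<in> Dmod l n a m"
  using Dmod_add[OF assms(1) Dmod_uminus[OF assms(2)]] by simp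

lemma Dmod_sum:
  assumes "\<And>s. s \<in> S \<Longrightarrow> F s \<in> Dmod l n a m"
  shows "(\<lambda>j. \<Sum>s\<in>S. F s j :: 'k::comm_ring_1 mpoly) \<in> Dmod l n a m"
  using assms
proof (induct S rule: infinite_finite_induct)
  case (infinite A) then show ?case using Dmod_zero by simp
next
  case empty then show ?case using Dmod_zero by simp
next
  case (insert x T) then show ?case using Dmod_add[of "F x" l n a m] by simp
qed

lemma Dmod_hc:
  assumes "\<delta> \<in> Dmod l n a (m :: nat \<Rightarrow> nat)"
  shows "(\<lambda>j. hc d (\<delta> j) :: 'k::comm_ring_1 mpoly) \<in> Dmod l n a m"
proof (rule DmodI)
  show "mpoly_in l (hc d (\<delta> j))" if "j < l" for j using DmodD(1)[OF assms that] by (rule mpoly_in_hc)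
  show "hc d (\<delta> j) = 0" if "j \<ge> l" for j using DmodD(2)[OF assms that] by simp
  fix i assume i: "i < n"
  obtain q where q: "mpoly_in l q" "der_apply l \<delta> (a i) = lin_form l (a i) ^ m i * q"
    using DmodD(3)[OF assms i] by blast
  have h: "homog (1 * m i) (lin_form l (a i) ^ m i :: 'k mpoly)" by (intro homog_pow homog_lin_form)
  show "\<exists>q. mpoly_in l q \<and> der_apply l (\<lambda>j. hc d (\<delta> j)) (a i) = lin_form l (a i) ^ m i * q"
  proof (cases "m i \<le> d")
    case True
    then show ?thesis using q h
      by (intro exI[of _ "hc (d - m i) q"]) (simp add: der_apply_hc hc_mult_homog mpoly_in_hc)
  next
    case False
    then show ?thesis using q h
      by (intro exI[of _ 0]) (simp add: der_apply_hc hc_mult_homog)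
  qed
qed

lemma Dmod_imap:
  assumes "\<delta> \<in> Dmod l n a m"
  shows "(\<lambda>j. imap (\<delta> j) :: 'k::comm_ring_1 mpoly) \<in> Dmod l n a m"
proof (rule DmodI)
  show "mpoly_in l (imap (\<delta> j))" if "j < l" for j using DmodD(1)[OF assms that] by (rule mpoly_in_imap)
  show "imap (\<delta> j) = 0" if "j \<ge> l" for j using DmodD(2)[OF assms that] by simp
  fix i assume i: "i < n"
  obtain q where q: "mpoly_in l q" "der_apply l \<delta> (a i) = lin_form l (a i) ^ m i * q"
    using DmodD(3)[OF assms i] by blast
  then have "imap (der_apply l \<delta> (a i)) = lin_form l (a i) ^ m i * (imap q :: 'k mpoly)"
    by (simp add: imap_mult imap_pow imap_lin_form)
  then show "\<exists>q. mpoly_in l q \<and> der_apply l (\<lambda>j. imap (\<delta> j)) (a i) = lin_form l (a i) ^ m i * (q :: 'k mpoly)"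
    using q(1) by (intro exI[of _ "imap q"]) (simp add: imap_der_apply mpoly_in_imap)
qed



lemma of_int_mod_ring_eq0: "(of_int x :: 'p::prime_card mod_ring) = 0 \<longleftrightarrow> int CARD('p) dvd x"
  by transfer (simp add: dvd_eq_mod_eq_0)

lemma of_int_to_int_mod_ring: "of_int (to_int_mod_ring (x :: 'p::prime_card mod_ring)) = x"
  by (simp add: of_int_of_int_mod_ring)

definition lift :: "'p::prime_card mod_ring mpoly \<Rightarrow> int mpoly" where
  "lift f = Poly_Mapping.map to_int_mod_ring f"

lemma lookup_lift: "Poly_Mapping.lookup (lift f) k = to_int_mod_ring (Poly_Mapping.lookup f k)"
  unfolding lift_def by (simp add: lookup_map0)

lemma imap_lift: "(imap (lift f) :: 'p::prime_card mod_ring mpoly) = f"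
  by (rule poly_mapping_eqI) (simp add: lookup_imap lookup_lift of_int_to_int_mod_ring)

lemma keys_lift: "Poly_Mapping.keys (lift f) \<subseteq> Poly_Mapping.keys f"
  unfolding lift_def by (rule keys_map_subset)

lemma lift_zero [simp]: "lift 0 = 0"
  by (rule poly_mapping_eqI) (simp add: lookup_lift)

definition divp :: "int \<Rightarrow> int mpoly \<Rightarrow> int mpoly" where
  "divp P f = Poly_Mapping.map (\<lambda>c. c div P) f"

lemma lookup_divp: "Poly_Mapping.lookup (divp P f) k = Poly_Mapping.lookup f k div P"
  unfolding divp_def by (simp add: lookup_map0)

lemma keys_divp: "Poly_Mapping.keys (divp P f) \<subseteq> Poly_Mapping.keys f"
  unfolding divp_def by (rule keys_map_subset)

lemma divp_zero [simp]: "divp P 0 = 0"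
  by (rule poly_mapping_eqI) (simp add: lookup_divp)

lemma imap_eq0_iff: "(imap f :: 'p::prime_card mod_ring mpoly) = 0 \<longleftrightarrow>
    (\<forall>k. int CARD('p) dvd Poly_Mapping.lookup f k)"
  by (simp add: poly_mapping_eq_iff lookup_imap fun_eq_iff of_int_mod_ring_eq0)

lemma imap_eq0_divp:
  assumes "(imap f :: 'p::prime_card mod_ring mpoly) = 0"
  shows "f = mconst (int CARD('p)) * divp (int CARD('p)) f"
proof (rule poly_mapping_eqI)
  fix k
  have "int CARD('p) dvd Poly_Mapping.lookup f k" using assms imap_eq0_iff by blast
  then show "Poly_Mapping.lookup f k = Poly_Mapping.lookup (mconst (int CARD('p)) * divp (int CARD('p)) f) k"
    by (simp add: mconst_mult_lookup lookup_divp)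
qed

lemma imap_mconst_card: "(imap (mconst (int CARD('p))) :: 'p::prime_card mod_ring mpoly) = 0"
  by (simp only: imap_mconst) simp

lemma mconst_nonzero: "c \<noteq> 0 \<Longrightarrow> mconst c \<noteq> 0"
  unfolding mconst_def by (metis lookup_single_eq lookup_zero)

lemma single_key_inj: "Poly_Mapping.single x (Suc 0) = Poly_Mapping.single k (Suc 0) \<Longrightarrow> x = k"
  by (metis lookup_single_eq lookup_single_not_eq zero_neq_one One_nat_def)

lemma lookup_lin_form:
  assumes "k < l"
  shows "Poly_Mapping.lookup (lin_form l c :: 'k::comm_ring_1 mpoly) (Poly_Mapping.single k 1) = of_int (c k)"
proof -
  have "Poly_Mapping.lookup (lin_form l c :: 'k mpoly) (Poly_Mapping.single k 1)
      = (\<Sum>k'<l. if k' = k then of_int (c k') else 0)"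
    unfolding lin_form_def lookup_sum
    by (rule sum.cong) (auto simp: lookup_single when_def dest: single_key_inj)
  also have "\<dots> = of_int (c k)" using assms by simp
  finally show ?thesis .
qed

lemma der_apply_cong:
  "(\<And>j. j < l \<Longrightarrow> \<delta>1 j = \<delta>2 j) \<Longrightarrow> der_apply l \<delta>1 c = der_apply l \<delta>2 c"
  by (simp add: der_apply_def)

locale thm44 =
  fixes l n :: nat and a :: "nat \<Rightarrow> nat \<Rightarrow> int" and m :: "nat \<Rightarrow> nat" and e :: "nat \<Rightarrow> nat"
    and pty :: "'p::prime_card itself"
  assumes primitive: "\<forall>i<n. \<forall>q::int. prime q \<longrightarrow> \<not> (\<forall>k<l. q dvd a i k)"
    and not_zd: "\<not> coker_zero_divisor l n a m (int CARD('p))"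
    and free_p: "free_with_exponents l (Dmod l n a m :: (nat \<Rightarrow> 'p mod_ring mpoly) set) e"
begin

abbreviation DZ :: "(nat \<Rightarrow> int mpoly) set" where "DZ \<equiv> Dmod l n a m"

lemma P_prime: "prime (int CARD('p))" by (rule prime_card_int)
lemma P_ge2: "int CARD('p) \<ge> 2" using P_prime prime_ge_2_int by blast

lemma lin_form_red_nonzero:
  assumes "i < n"
  shows "(lin_form l (a i) :: 'p mod_ring mpoly) \<noteq> 0"
proof -
  obtain k where k: "k < l" "\<not> (int CARD('p)) dvd a i k" using primitive assms P_prime by blast
  have "Poly_Mapping.lookup (lin_form l (a i) :: 'p mod_ring mpoly) (Poly_Mapping.single k 1) \<noteq> 0"
    using k lookup_lin_form[OF k(1), of "a i", where 'k = "'p mod_ring"] by (simp add: of_int_mod_ring_eq0)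
  then show ?thesis by auto
qed

lemma kernel:
  assumes "\<delta> \<in> DZ" "\<And>j. (imap :: int mpoly \<Rightarrow> 'p mod_ring mpoly) (\<delta> j) = 0"
  shows "\<exists>\<delta>1 \<in> DZ. (\<forall>j. \<delta> j = mconst (int CARD('p)) * \<delta>1 j) \<and> (\<forall>j. Poly_Mapping.keys (\<delta>1 j) \<subseteq> Poly_Mapping.keys (\<delta> j))"
proof -
  define \<delta>1 where "\<delta>1 j = divp (int CARD('p)) (\<delta> j)" for j
  have d: "\<delta> = (\<lambda>j. mconst (int CARD('p)) * \<delta>1 j)"
    unfolding \<delta>1_def using imap_eq0_divp assms(2) by blast
  have "\<delta>1 \<in> DZ"
  proof (rule DmodI)
    show "mpoly_in l (\<delta>1 j)" if "j < l" for j
      unfolding \<delta>1_def using DmodD(1)[OF assms(1) that] by (rule mpoly_in_subset) (rule keys_divp)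
    show "\<delta>1 j = 0" if "l \<le> j" for j unfolding \<delta>1_def using DmodD(2)[OF assms(1) that] by simp
    fix i assume i: "i < n"
    obtain q where q: "mpoly_in l q" "der_apply l \<delta> (a i) = lin_form l (a i) ^ m i * q"
      using DmodD(3)[OF assms(1) i] by blast
    have "(imap :: int mpoly \<Rightarrow> 'p mod_ring mpoly) (der_apply l \<delta> (a i)) = der_apply l (\<lambda>j. (imap :: int mpoly \<Rightarrow> 'p mod_ring mpoly) (\<delta> j)) (a i)" by (rule imap_der_apply)
    also have "\<dots> = 0" using assms(2) by (simp add: der_apply_def)
    finally have "(lin_form l (a i) :: 'p mod_ring mpoly) ^ m i * (imap :: int mpoly \<Rightarrow> 'p mod_ring mpoly) q = 0"
      using q by (simp add: imap_mult imap_pow imap_lin_form)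
    then have "(imap :: int mpoly \<Rightarrow> 'p mod_ring mpoly) q = 0" using lin_form_red_nonzero[OF i] by simp
    then have q1: "q = mconst (int CARD('p)) * divp (int CARD('p)) q" by (rule imap_eq0_divp)
    have "mconst (int CARD('p)) * der_apply l \<delta>1 (a i) = der_apply l \<delta> (a i)"
      by (subst d) (simp add: der_apply_smult)
    also have "\<dots> = mconst (int CARD('p)) * (lin_form l (a i) ^ m i * divp (int CARD('p)) q)"
      using q(2) q1 by (metis mult.left_commute)
    finally have "der_apply l \<delta>1 (a i) = lin_form l (a i) ^ m i * divp (int CARD('p)) q"
      using mconst_nonzero[of "int CARD('p)"] P_ge2 by simp
    moreover have "mpoly_in l (divp (int CARD('p)) q)" using q(1) by (rule mpoly_in_subset) (rule keys_divp)
    ultimately show "\<exists>q. mpoly_in l q \<and> der_apply l \<delta>1 (a i) = lin_form l (a i) ^ m i * q" by blast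
  qed
  moreover have "\<forall>j. Poly_Mapping.keys (\<delta>1 j) \<subseteq> Poly_Mapping.keys (\<delta> j)"
    unfolding \<delta>1_def using keys_divp by blast
  ultimately show ?thesis using d by blast
qed


lemma lift_D:
  assumes "\<delta> \<in> (Dmod l n a m :: (nat \<Rightarrow> 'p mod_ring mpoly) set)"
  shows "\<exists>\<theta> \<in> DZ. \<forall>j. (imap (\<theta> j) :: 'p mod_ring mpoly) = \<delta> j"
proof -
  let ?P = "int CARD('p)"
  have "\<forall>i. \<exists>q. i < n \<longrightarrow> mpoly_in l q \<and> der_apply l \<delta> (a i) = lin_form l (a i) ^ m i * q"
    using DmodD(3)[OF assms] by blast
  then obtain qf where qf0: "\<forall>i. i < n \<longrightarrow> mpoly_in l (qf i) \<and> der_apply l \<delta> (a i) = lin_form l (a i) ^ m i * qf i"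
    by (rule choice[THEN exE])
  then have qf: "\<And>i. i < n \<Longrightarrow> mpoly_in l (qf i) \<and> der_apply l \<delta> (a i) = lin_form l (a i) ^ m i * qf i"
    by blast
  define dt where "dt j = lift (\<delta> j)" for j
  define v where "v i = der_apply l dt (a i) - lin_form l (a i) ^ m i * lift (qf i)" for i
  define w where "w i = divp ?P (v i)" for i
  have dt_in: "mpoly_in l (dt j)" if "j < l" for j
    unfolding dt_def using DmodD(1)[OF assms that] by (rule mpoly_in_subset) (rule keys_lift)
  have v_in: "mpoly_in l (v i)" if "i < n" for i
    unfolding v_def der_apply_def using qf[OF that]
    by (intro mpoly_in_diff mpoly_in_sum mpoly_in_mult mpoly_in_mconst dt_in mpoly_in_pow mpoly_in_lin_form)
      (auto intro: mpoly_in_subset[OF _ keys_lift])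
  have red_dt: "(imap (dt j) :: 'p mod_ring mpoly) = \<delta> j" for j
    unfolding dt_def by (rule imap_lift)
  have red_v: "(imap (v i) :: 'p mod_ring mpoly) = 0" if "i < n" for i
    using qf[OF that] by (simp add: v_def imap_minus imap_der_apply red_dt imap_mult imap_pow imap_lin_form imap_lift)
  have vw: "v i = mconst ?P * w i" if "i < n" for i
    unfolding w_def using red_v[OF that] by (rule imap_eq0_divp)
  have w_in: "mpoly_in l (w i)" if "i < n" for i
    unfolding w_def using v_in[OF that] by (rule mpoly_in_subset) (rule keys_divp)
  have "in_M_plus_image l n a m (\<lambda>i. mconst ?P * w i)"
    unfolding in_M_plus_image_def
  proof (rule exI[of _ dt], rule exI[of _ "\<lambda>i. - lift (qf i)"], intro conjI allI impI)
    show "mpoly_in l (dt j)" if "j < l" for j using that by (rule dt_in)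
    fix i assume i: "i < n"
    show "mpoly_in l (- lift (qf i))" using qf[OF i]
      by (intro mpoly_in_uminus) (auto intro: mpoly_in_subset[OF _ keys_lift])
    show "mconst ?P * w i = (\<Sum>j<l. mconst (a i j) * dt j) + lin_form l (a i) ^ m i * - lift (qf i)"
      using vw[OF i] by (simp add: v_def der_apply_def)
  qed
  then have "in_M_plus_image l n a m w"
  proof -
    have "\<not> ((\<forall>i<n. mpoly_in l (w i)) \<and> \<not> in_M_plus_image l n a m w \<and> in_M_plus_image l n a m (\<lambda>i. mconst ?P * w i))"
      using not_zd unfolding coker_zero_divisor_def by blast
    then show ?thesis using w_in \<open>in_M_plus_image l n a m (\<lambda>i. mconst ?P * w i)\<close> by blast
  qed
  then obtain g q where g: "\<And>j. j < l \<Longrightarrow> mpoly_in l (g j)"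
    and q: "\<And>i. i < n \<Longrightarrow> mpoly_in l (q i) \<and> w i = (\<Sum>j<l. mconst (a i j) * g j) + lin_form l (a i) ^ m i * q i"
    unfolding in_M_plus_image_def by blast
  define \<theta> where "\<theta> j = (if j < l then dt j - mconst ?P * g j else 0)" for j
  have "\<theta> \<in> DZ"
  proof (rule DmodI)
    show "mpoly_in l (\<theta> j)" if "j < l" for j
      using that dt_in g by (simp add: \<theta>_def mpoly_in_diff mpoly_in_mult mpoly_in_mconst)
    show "\<theta> j = 0" if "l \<le> j" for j using that by (simp add: \<theta>_def)
    fix i assume i: "i < n"
    have "der_apply l \<theta> (a i) = der_apply l (\<lambda>j. dt j - mconst ?P * g j) (a i)"
      by (rule der_apply_cong) (simp add: \<theta>_def)
    also have "\<dots> = der_apply l dt (a i) - mconst ?P * (\<Sum>j<l. mconst (a i j) * g j)"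
      by (simp add: der_apply_diff der_apply_smult der_apply_def)
    also have "\<dots> = v i + lin_form l (a i) ^ m i * lift (qf i) - mconst ?P * (w i - lin_form l (a i) ^ m i * q i)"
      using q[OF i] by (simp add: v_def)
    also have "\<dots> = lin_form l (a i) ^ m i * (lift (qf i) + mconst ?P * q i)"
      using vw[OF i] by (simp add: algebra_simps)
    finally have "der_apply l \<theta> (a i) = lin_form l (a i) ^ m i * (lift (qf i) + mconst ?P * q i)" .
    moreover have "mpoly_in l (lift (qf i) + mconst ?P * q i)"
      using qf[OF i] q[OF i] by (intro mpoly_in_add mpoly_in_mult mpoly_in_mconst) (auto intro: mpoly_in_subset[OF _ keys_lift])
    ultimately show "\<exists>q. mpoly_in l q \<and> der_apply l \<theta> (a i) = lin_form l (a i) ^ m i * q" by blast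
  qed
  moreover have "(imap (\<theta> j) :: 'p mod_ring mpoly) = \<delta> j" for j
  proof (cases "j < l")
    case True
    then show ?thesis by (simp add: \<theta>_def imap_minus imap_mult red_dt imap_mconst_card)
  next
    case False
    then show ?thesis using DmodD(2)[OF assms, of j] by (simp add: \<theta>_def)
  qed
  ultimately show ?thesis by blast
qed

lemma lift_D_homog:
  assumes "\<delta> \<in> (Dmod l n a m :: (nat \<Rightarrow> 'p mod_ring mpoly) set)" "homog_der d \<delta>"
  shows "\<exists>\<theta> \<in> DZ. homog_der d \<theta> \<and> (\<forall>j. (imap (\<theta> j) :: 'p mod_ring mpoly) = \<delta> j)"
proof -
  obtain \<theta> where \<theta>: "\<theta> \<in> DZ" "\<And>j. (imap (\<theta> j) :: 'p mod_ring mpoly) = \<delta> j"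
    using lift_D[OF assms(1)] by blast
  have "(\<lambda>j. hc d (\<theta> j)) \<in> DZ" using \<theta>(1) by (rule Dmod_hc)
  moreover have "homog_der d (\<lambda>j. hc d (\<theta> j))"
    unfolding homog_der_def using homog_hc[of d, unfolded homog_def] by blast
  moreover have "(imap (hc d (\<theta> j)) :: 'p mod_ring mpoly) = \<delta> j" for j
  proof -
    have "homog d (\<delta> j)" using assms(2) by (simp add: homog_der_def homog_def)
    then show ?thesis by (simp add: imap_hc \<theta>(2) hc_homog)
  qed
  ultimately show ?thesis by blast
qed

end

lemma homog_derD: "homog_der d \<delta> \<Longrightarrow> homog d (\<delta> j)"
  by (simp add: homog_der_def homog_def)

lemma homog_derI: "(\<And>j. homog d (\<delta> j)) \<Longrightarrow> homog_der d \<delta>"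
  by (simp add: homog_der_def homog_def)

definition cz :: "(nat \<Rightarrow> int mpoly) \<Rightarrow> nat \<times> (nat \<Rightarrow>\<^sub>0 nat) \<Rightarrow> rat" where
  "cz \<delta> = (\<lambda>x. of_int (Poly_Mapping.lookup (\<delta> (fst x)) (snd x)))"

lemma cz_add: "cz (\<lambda>j. f j + g j) x = cz f x + cz g x"
  by (simp add: cz_def lookup_add)

lemma cz_mconst: "cz (\<lambda>j. mconst c * f j) x = of_int c * cz f x"
  by (simp add: cz_def mconst_mult_lookup)

lemma lookup_single_mult:
  "Poly_Mapping.lookup (Poly_Mapping.single u c * g) w = c * Poly_Mapping.lookup (Poly_Mapping.single u 1 * (g :: 'k::comm_ring_1 mpoly)) w"
  by (subst single_mult_split) (rule mconst_mult_lookup)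

lemma gen_expand:
  fixes c :: "nat \<Rightarrow> (nat \<Rightarrow>\<^sub>0 nat) \<Rightarrow> 'k::comm_ring_1" and T :: "nat \<Rightarrow> 'k mpoly"
  assumes "finite S" "\<And>s. s \<in> S \<Longrightarrow> finite (U s)"
  shows "Poly_Mapping.lookup (\<Sum>s\<in>S. (\<Sum>u\<in>U s. Poly_Mapping.single u (c s u)) * T s) w =
     (\<Sum>y\<in>Sigma S U. c (fst y) (snd y) * Poly_Mapping.lookup (Poly_Mapping.single (snd y) 1 * T (fst y)) w)"
proof -
  have "Poly_Mapping.lookup (\<Sum>s\<in>S. (\<Sum>u\<in>U s. Poly_Mapping.single u (c s u)) * T s) w =
      (\<Sum>s\<in>S. \<Sum>u\<in>U s. Poly_Mapping.lookup (Poly_Mapping.single u (c s u) * T s) w)"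
    by (simp only: lookup_sum sum_distrib_right)
  also have "\<dots> = (\<Sum>s\<in>S. \<Sum>u\<in>U s. c s u * Poly_Mapping.lookup (Poly_Mapping.single u 1 * T s) w)"
    by (intro sum.cong refl) (rule lookup_single_mult)
  also have "\<dots> = (\<Sum>(s, u)\<in>Sigma S U. c s u * Poly_Mapping.lookup (Poly_Mapping.single u 1 * T s) w)"
    by (rule sum.Sigma) (use assms in auto)
  also have "\<dots> = (\<Sum>y\<in>Sigma S U. c (fst y) (snd y) * Poly_Mapping.lookup (Poly_Mapping.single (snd y) 1 * T (fst y)) w)"
    by (rule sum.cong) auto
  finally show ?thesis .
qed

lemma keys_monoms: "mpoly_in l f \<Longrightarrow> homog k f \<Longrightarrow> Poly_Mapping.keys f \<subseteq> monoms l k"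
  by (auto simp: mpoly_in_def homog_def monoms_def)

lemma sum_restrict_zero:
  assumes "finite A" "\<And>x. x \<in> A \<Longrightarrow> \<not> Q x \<Longrightarrow> f x = 0"
  shows "(\<Sum>x\<in>A. f x) = (\<Sum>x\<in>{x\<in>A. Q x}. f x)"
  using assms by (intro sum.mono_neutral_right) auto

lemma ex1_same: "\<exists>!x. P x \<Longrightarrow> P a \<Longrightarrow> P b \<Longrightarrow> a = b"
  by blast

definition intp :: "int \<Rightarrow> rat mpoly \<Rightarrow> int mpoly" where
  "intp N f = Poly_Mapping.map (\<lambda>r. \<lfloor>of_int N * r\<rfloor>) f"

lemma keys_intp: "Poly_Mapping.keys (intp N f) \<subseteq> Poly_Mapping.keys f"
  unfolding intp_def by (rule keys_map_subset)

lemma imap_intp: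
  assumes "\<forall>w\<in>Poly_Mapping.keys f. of_int N * Poly_Mapping.lookup f w \<in> \<int>"
  shows "(imap (intp N f) :: rat mpoly) = mconst (of_int N) * f"
proof (rule poly_mapping_eqI)
  fix w
  show "Poly_Mapping.lookup (imap (intp N f) :: rat mpoly) w = Poly_Mapping.lookup (mconst (of_int N) * f) w"
  proof (cases "w \<in> Poly_Mapping.keys f")
    case True
    then show ?thesis using assms
      by (auto simp: lookup_imap intp_def lookup_map0 mconst_mult_lookup elim!: Ints_cases)
  next
    case False
    then show ?thesis by (simp add: lookup_imap intp_def lookup_map0 mconst_mult_lookup in_keys_iff)
  qed
qed

lemma common_denom_family:
  fixes F :: "'t \<Rightarrow> rat mpoly"
  assumes "finite T"
  shows "\<exists>N::int. N > 0 \<and> (\<forall>t\<in>T. \<forall>w\<in>Poly_Mapping.keys (F t). of_int N * Poly_Mapping.lookup (F t) w \<in> \<int>)"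
proof -
  have "finite (Sigma T (\<lambda>t. Poly_Mapping.keys (F t)))" using assms by auto
  from rat_common_denom[OF this, of "\<lambda>x. Poly_Mapping.lookup (F (fst x)) (snd x)"]
  show ?thesis by auto
qed

lemma hc_decomp:
  assumes "finite D" "mdeg ` Poly_Mapping.keys f \<subseteq> D"
  shows "f = (\<Sum>d\<in>D. hc d f)"
proof (rule poly_mapping_eqI)
  fix mm
  have "Poly_Mapping.lookup (\<Sum>d\<in>D. hc d f) mm = (\<Sum>d\<in>D. if mdeg mm = d then Poly_Mapping.lookup f mm else 0)"
    by (simp add: lookup_sum lookup_hc)
  also have "\<dots> = (if mdeg mm \<in> D then Poly_Mapping.lookup f mm else 0)"
    using assms(1) by (simp add: sum.delta)
  also have "\<dots> = Poly_Mapping.lookup f mm"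
  proof -
    have "mdeg mm \<in> D" if "Poly_Mapping.lookup f mm \<noteq> 0"
    proof -
      have "mm \<in> Poly_Mapping.keys f" using that by (simp add: in_keys_iff)
      then show ?thesis using assms(2) by blast
    qed
    then show ?thesis by auto
  qed
  finally show "Poly_Mapping.lookup f mm = Poly_Mapping.lookup (\<Sum>d\<in>D. hc d f) mm" ..
qed

lemma all_powers_dvd:
  fixes P c :: int
  assumes "P \<ge> 2" "\<And>k. P ^ k dvd c"
  shows "c = 0"
proof (rule ccontr)
  assume c: "c \<noteq> 0"
  let ?k = "nat \<bar>c\<bar>"
  have "\<bar>P ^ ?k\<bar> \<le> \<bar>c\<bar>" using dvd_imp_le_int[OF c assms(2)] .
  moreover have "int ?k < 2 ^ ?k"
  proof -
    have "int ?k < int (2 ^ ?k)" using less_exp[of ?k] by (simp only: of_nat_less_iff)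
    then show ?thesis by simp
  qed
  moreover have "(2::int) ^ ?k \<le> P ^ ?k" using assms(1) by (simp add: power_mono)
  ultimately show False by simp
qed

locale thm44b = thm44 l n a m e pty for l n a m e and pty :: "'p::prime_card itself" +
  fixes B :: "nat \<Rightarrow> nat \<Rightarrow> 'p::prime_card mod_ring mpoly" and \<theta> :: "nat \<Rightarrow> nat \<Rightarrow> int mpoly"
  assumes B_in: "\<And>s. s < l \<Longrightarrow> B s \<in> Dmod l n a m \<and> homog_der (e s) (B s)"
    and B_rep: "\<And>\<delta>. \<delta> \<in> Dmod l n a m \<Longrightarrow> \<exists>!g. (\<forall>s<l. mpoly_in l (g s)) \<and> (\<forall>s\<ge>l. g s = 0) \<and> \<delta> = (\<lambda>j. \<Sum>s<l. g s * B s j)"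
    and \<theta>_in: "\<And>s. s < l \<Longrightarrow> \<theta> s \<in> Dmod l n a m \<and> homog_der (e s) (\<theta> s) \<and> (\<forall>j. imap (\<theta> s j) = B s j)"
begin

lemma rep_modp:
  assumes dZ: "\<delta> \<in> DZ" and hd: "homog_der d \<delta>"
  shows "\<exists>g \<delta>1. (\<forall>s<l. mpoly_in l (g s) \<and> homog (d - e s) (g s) \<and> (d < e s \<longrightarrow> g s = 0)) \<and>
     \<delta>1 \<in> DZ \<and> homog_der d \<delta>1 \<and> (\<forall>j. \<delta> j = (\<Sum>s<l. g s * \<theta> s j) + mconst (int CARD('p)) * \<delta>1 j)"
proof -
  let ?P = "int CARD('p)"
  let ?r = "\<lambda>j. (imap (\<delta> j) :: 'p mod_ring mpoly)"
  have "?r \<in> Dmod l n a m" using dZ by (rule Dmod_imap)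
  then obtain gb where gb: "\<forall>s<l. mpoly_in l (gb s)" "?r = (\<lambda>j. \<Sum>s<l. gb s * B s j)"
    using B_rep by blast
  define gh where "gh s = (if e s \<le> d then hc (d - e s) (gb s) else 0)" for s
  have r_eq: "?r j = (\<Sum>s<l. gh s * B s j)" for j
  proof -
    have "homog d (?r j)" using hd by (intro homog_imap homog_derD)
    then have "?r j = hc d (?r j)" by (simp add: hc_homog)
    also have "\<dots> = (\<Sum>s<l. hc d (gb s * B s j))" using gb(2) by (simp add: fun_eq_iff hc_sum)
    also have "\<dots> = (\<Sum>s<l. gh s * B s j)"
    proof (rule sum.cong)
      fix s assume "s \<in> {..<l}"
      then have "homog (e s) (B s j)" using B_in by (auto intro: homog_derD)
      then show "hc d (gb s * B s j) = gh s * B s j" by (simp add: hc_mult_homog_right gh_def)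
    qed simp
    finally show ?thesis .
  qed
  define g where "g s = lift (gh s)" for s
  have g_props: "mpoly_in l (g s) \<and> homog (d - e s) (g s) \<and> (d < e s \<longrightarrow> g s = 0)" if "s < l" for s
  proof (intro conjI impI)
    have "mpoly_in l (gh s)" using gb(1) that by (simp add: gh_def mpoly_in_hc)
    then show "mpoly_in l (g s)" unfolding g_def by (rule mpoly_in_subset) (rule keys_lift)
    have "homog (d - e s) (gh s)" by (simp add: gh_def homog_hc)
    then show "homog (d - e s) (g s)" unfolding g_def homog_def using keys_lift by blast
    show "g s = 0" if "d < e s" using that by (simp add: g_def gh_def)
  qed
  define \<delta>' where "\<delta>' j = \<delta> j - (\<Sum>s<l. g s * \<theta> s j)" for j
  have d'Z: "\<delta>' \<in> DZ"
    unfolding \<delta>'_def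
  proof (rule Dmod_diff[OF dZ], rule Dmod_sum)
    fix s assume "s \<in> {..<l}"
    then show "(\<lambda>j. g s * \<theta> s j) \<in> DZ" using g_props \<theta>_in by (intro Dmod_smult) auto
  qed
  have red0: "(imap (\<delta>' j) :: 'p mod_ring mpoly) = 0" for j
  proof -
    have "(imap (\<Sum>s<l. g s * \<theta> s j) :: 'p mod_ring mpoly) = (\<Sum>s<l. gh s * B s j)"
      by (simp add: imap_sum imap_mult g_def imap_lift \<theta>_in)
    then show ?thesis by (simp add: \<delta>'_def imap_minus r_eq)
  qed
  obtain \<delta>1 where d1: "\<delta>1 \<in> DZ" "\<forall>j. \<delta>' j = mconst ?P * \<delta>1 j" "\<forall>j. Poly_Mapping.keys (\<delta>1 j) \<subseteq> Poly_Mapping.keys (\<delta>' j)"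
    using kernel[OF d'Z red0] by blast
  have "homog d (\<delta>' j)" for j
    unfolding \<delta>'_def
  proof (intro homog_diff homog_derD[OF hd] homog_sum)
    fix s assume s: "s \<in> {..<l}"
    show "homog d (g s * \<theta> s j)"
    proof (cases "e s \<le> d")
      case True
      have s': "s < l" using s by simp
      have "homog (d - e s + e s) (g s * \<theta> s j)"
        using g_props[OF s'] \<theta>_in[OF s'] by (intro homog_mult) (auto intro: homog_derD)
      then show ?thesis using True by simp
    next
      case False
      then show ?thesis using g_props s by simp
    qed
  qed
  then have "homog_der d \<delta>1"
    using d1(3) unfolding homog_der_def homog_def by blast
  moreover have "\<forall>j. \<delta> j = (\<Sum>s<l. g s * \<theta> s j) + mconst ?P * \<delta>1 j"
    using d1(2) by (simp add: \<delta>'_def algebra_simps)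
  ultimately show ?thesis using g_props d1(1) by blast
qed


definition Jd :: "nat \<Rightarrow> (nat \<times> (nat \<Rightarrow>\<^sub>0 nat)) set" where
  "Jd d = Sigma {s. s < l \<and> e s \<le> d} (\<lambda>s. monoms l (d - e s))"

definition fv :: "nat \<times> (nat \<Rightarrow>\<^sub>0 nat) \<Rightarrow> nat \<times> (nat \<Rightarrow>\<^sub>0 nat) \<Rightarrow> rat" where
  "fv y = cz (\<lambda>j. Poly_Mapping.single (snd y) 1 * \<theta> (fst y) j)"

lemma finite_Jd: "finite (Jd d)"
  unfolding Jd_def by (intro finite_SigmaI finite_monoms) auto

lemma expand_int:
  assumes g: "\<forall>s<l. mpoly_in l (g s) \<and> homog (d - e s) (g s) \<and> (d < e s \<longrightarrow> g s = 0)"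
  shows "cz (\<lambda>j. \<Sum>s<l. g s * \<theta> s j) x = (\<Sum>y\<in>Jd d. of_int (Poly_Mapping.lookup (g (fst y)) (snd y)) * fv y x)"
proof -
  let ?S = "{s. s < l \<and> e s \<le> d}"
  let ?U = "\<lambda>s. monoms l (d - e s)"
  have S: "{s \<in> {..<l}. e s \<le> d} = ?S" by auto
  have gs: "g s = (\<Sum>u\<in>?U s. Poly_Mapping.single u (Poly_Mapping.lookup (g s) u))" if "s \<in> ?S" for s
    using that g by (intro poly_single_sum finite_monoms keys_monoms) auto
  have "(\<Sum>s<l. g s * \<theta> s (fst x)) = (\<Sum>s\<in>?S. g s * \<theta> s (fst x))"
    using g by (subst sum_restrict_zero[where Q = "\<lambda>s. e s \<le> d"]) (auto simp: S)
  also have "\<dots> = (\<Sum>s\<in>?S. (\<Sum>u\<in>?U s. Poly_Mapping.single u (Poly_Mapping.lookup (g s) u)) * \<theta> s (fst x))"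
    by (rule sum.cong) (use gs in auto)
  finally have eq: "(\<Sum>s<l. g s * \<theta> s (fst x)) = \<dots>" .
  have "cz (\<lambda>j. \<Sum>s<l. g s * \<theta> s j) x = of_int (Poly_Mapping.lookup (\<Sum>s<l. g s * \<theta> s (fst x)) (snd x))"
    by (simp add: cz_def)
  also have "\<dots> = of_int (\<Sum>y\<in>Jd d. Poly_Mapping.lookup (g (fst y)) (snd y) * Poly_Mapping.lookup (Poly_Mapping.single (snd y) 1 * \<theta> (fst y) (fst x)) (snd x))"
    unfolding eq Jd_def by (subst gen_expand) (auto intro: finite_monoms)
  also have "\<dots> = (\<Sum>y\<in>Jd d. of_int (Poly_Mapping.lookup (g (fst y)) (snd y)) * fv y x)"
    by (simp add: fv_def cz_def)
  finally show ?thesis .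
qed

lemma approx:
  assumes "\<delta> \<in> DZ" "homog_der d \<delta>"
  shows "\<exists>c \<epsilon>. \<epsilon> \<in> DZ \<and> homog_der d \<epsilon> \<and>
     cz \<delta> = (\<lambda>x. (\<Sum>y\<in>Jd d. c y * fv y x) + of_int (int CARD('p) ^ k) * cz \<epsilon> x)"
proof (induct k)
  case 0
  show ?case by (rule exI[of _ "\<lambda>_. 0"], rule exI[of _ \<delta>]) (simp add: assms)
next
  case (Suc k)
  let ?P = "int CARD('p)"
  obtain c \<epsilon> where ce: "\<epsilon> \<in> DZ" "homog_der d \<epsilon>"
    "cz \<delta> = (\<lambda>x. (\<Sum>y\<in>Jd d. c y * fv y x) + of_int (?P ^ k) * cz \<epsilon> x)"
    using Suc by blast
  obtain g \<epsilon>1 where g: "\<forall>s<l. mpoly_in l (g s) \<and> homog (d - e s) (g s) \<and> (d < e s \<longrightarrow> g s = 0)"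
    and e1: "\<epsilon>1 \<in> DZ" "homog_der d \<epsilon>1" "\<forall>j. \<epsilon> j = (\<Sum>s<l. g s * \<theta> s j) + mconst ?P * \<epsilon>1 j"
    using rep_modp[OF ce(1,2)] by blast
  define c' :: "nat \<times> (nat \<Rightarrow>\<^sub>0 nat) \<Rightarrow> rat" where "c' y = of_int (Poly_Mapping.lookup (g (fst y)) (snd y))" for y
  have "cz \<epsilon> x = (\<Sum>y\<in>Jd d. c' y * fv y x) + of_int ?P * cz \<epsilon>1 x" for x
  proof -
    have "\<epsilon> = (\<lambda>j. (\<Sum>s<l. g s * \<theta> s j) + mconst ?P * \<epsilon>1 j)" using e1(3) by auto
    then have "cz \<epsilon> x = cz (\<lambda>j. \<Sum>s<l. g s * \<theta> s j) x + of_int ?P * cz \<epsilon>1 x"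
      by (simp add: cz_add cz_mconst)
    then show ?thesis using expand_int[OF g] by (simp add: c'_def)
  qed
  moreover have "(\<Sum>y\<in>Jd d. (c y + A * c' y) * fv y x) = (\<Sum>y\<in>Jd d. c y * fv y x) + A * (\<Sum>y\<in>Jd d. c' y * fv y x)" for A x
    by (simp add: distrib_right sum.distrib sum_distrib_left mult.assoc)
  ultimately have "cz \<delta> = (\<lambda>x. (\<Sum>y\<in>Jd d. (c y + of_int (?P ^ k) * c' y) * fv y x) + of_int (?P ^ Suc k) * cz \<epsilon>1 x)"
    using ce(3) by (simp add: fun_eq_iff distrib_left mult.assoc)
  then show ?case using e1(1,2)
    by (intro exI[of _ "\<lambda>y. c y + of_int (?P ^ k) * c' y"] exI[of _ \<epsilon>1]) simp
qed


lemma cz_int: "cz \<delta> x \<in> \<int>"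
  by (simp add: cz_def)

lemma lookup_single_imap:
  "Poly_Mapping.lookup (Poly_Mapping.single u 1 * (imap T :: 'k::comm_ring_1 mpoly)) w = of_int (Poly_Mapping.lookup (Poly_Mapping.single u 1 * T) w)"
proof -
  have "Poly_Mapping.single u 1 * (imap T :: 'k mpoly) = imap (Poly_Mapping.single u 1 * T)"
    by (simp add: imap_mult imap_single)
  then show ?thesis by (simp add: lookup_imap)
qed

lemma homog_gen:
  assumes dZ: "\<delta> \<in> DZ" and hd: "homog_der d \<delta>"
  shows "\<exists>G. (\<forall>s<l. mpoly_in l (G s)) \<and> (\<forall>j. (imap (\<delta> j) :: rat mpoly) = (\<Sum>s<l. G s * imap (\<theta> s j)))"
proof -
  let ?I = "{..<l} \<times> monoms l d"
  have "\<exists>c. cz \<delta> = (\<lambda>x. \<Sum>y\<in>Jd d. c y * fv y x)"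
  proof (rule LA[OF finite_Jd _ P_ge2])
    show "finite ?I" by (intro finite_SigmaI finite_monoms) auto
    fix k
    obtain c \<epsilon> where ce: "\<epsilon> \<in> DZ" "homog_der d \<epsilon>"
      "cz \<delta> = (\<lambda>x. (\<Sum>y\<in>Jd d. c y * fv y x) + of_int (int CARD('p) ^ k) * cz \<epsilon> x)"
      using approx[OF dZ hd, of k] by blast
    have out: "cz \<epsilon> x = 0" if "x \<notin> ?I" for x
    proof (cases "fst x < l")
      case True
      then have "snd x \<notin> monoms l d" using that by (cases x) auto
      moreover have "Poly_Mapping.keys (\<epsilon> (fst x)) \<subseteq> monoms l d"
        using DmodD(1)[OF ce(1) True] homog_derD[OF ce(2)] by (rule keys_monoms)
      ultimately show ?thesis by (auto simp: cz_def in_keys_iff)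
    next
      case False
      then show ?thesis using DmodD(2)[OF ce(1), of "fst x"] by (simp add: cz_def)
    qed
    show "\<exists>c \<epsilon>. (\<forall>x. \<epsilon> x \<in> \<int>) \<and> (\<forall>x. x \<notin> ?I \<longrightarrow> \<epsilon> x = 0) \<and>
         cz \<delta> = (\<lambda>x. (\<Sum>y\<in>Jd d. c y * fv y x) + of_int (int CARD('p) ^ k) * \<epsilon> x)"
      using ce(3) out cz_int by blast
  qed
  then obtain c where c: "cz \<delta> = (\<lambda>x. \<Sum>y\<in>Jd d. c y * fv y x)" by blast
  let ?S = "{s. s < l \<and> e s \<le> d}"
  define G where "G s = (if e s \<le> d then (\<Sum>u\<in>monoms l (d - e s). Poly_Mapping.single u (c (s, u))) else 0)" for s
  have G_in: "mpoly_in l (G s)" for s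
    unfolding G_def by (auto intro!: mpoly_in_sum mpoly_in_single simp: monoms_def)
  have "(imap (\<delta> j) :: rat mpoly) = (\<Sum>s<l. G s * imap (\<theta> s j))" for j
  proof (rule poly_mapping_eqI)
    fix w
    have S: "{s \<in> {..<l}. e s \<le> d} = ?S" by auto
    have "(\<Sum>s<l. G s * (imap (\<theta> s j) :: rat mpoly)) = (\<Sum>s\<in>?S. G s * imap (\<theta> s j))"
      by (subst sum_restrict_zero[where Q = "\<lambda>s. e s \<le> d"]) (auto simp: S G_def)
    also have "\<dots> = (\<Sum>s\<in>?S. (\<Sum>u\<in>monoms l (d - e s). Poly_Mapping.single u (c (s, u))) * imap (\<theta> s j))"
      by (rule sum.cong) (auto simp: G_def)
    finally have eq: "(\<Sum>s<l. G s * (imap (\<theta> s j) :: rat mpoly)) = \<dots>" .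
    have "Poly_Mapping.lookup (\<Sum>s<l. G s * (imap (\<theta> s j) :: rat mpoly)) w
        = (\<Sum>y\<in>Jd d. c (fst y, snd y) * Poly_Mapping.lookup (Poly_Mapping.single (snd y) 1 * (imap (\<theta> (fst y) j) :: rat mpoly)) w)"
      unfolding eq Jd_def by (rule gen_expand[where c = "\<lambda>s u. c (s, u)"]) (auto intro: finite_monoms)
    also have "\<dots> = (\<Sum>y\<in>Jd d. c y * fv y (j, w))"
      by (simp add: lookup_single_imap fv_def cz_def)
    also have "\<dots> = cz \<delta> (j, w)" using c by simp
    also have "\<dots> = Poly_Mapping.lookup (imap (\<delta> j) :: rat mpoly) w" by (simp add: cz_def lookup_imap)
    finally show "Poly_Mapping.lookup (imap (\<delta> j) :: rat mpoly) w = Poly_Mapping.lookup (\<Sum>s<l. G s * imap (\<theta> s j)) w" ..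
  qed
  then show ?thesis using G_in by blast
qed


lemma clear_denoms:
  assumes dQ: "\<delta> \<in> (Dmod l n a m :: (nat \<Rightarrow> rat mpoly) set)"
  shows "\<exists>N::int. N > 0 \<and> (\<exists>\<delta>Z\<in>DZ. \<forall>j. (imap (\<delta>Z j) :: rat mpoly) = mconst (of_int N) * \<delta> j)"
proof -
  have "\<forall>i. \<exists>q. i < n \<longrightarrow> mpoly_in l q \<and> der_apply l \<delta> (a i) = lin_form l (a i) ^ m i * q"
    using DmodD(3)[OF dQ] by blast
  then obtain qf where qf0: "\<forall>i. i < n \<longrightarrow> mpoly_in l (qf i) \<and> der_apply l \<delta> (a i) = lin_form l (a i) ^ m i * qf i"
    by (rule choice[THEN exE])
  then have qf: "\<And>i. i < n \<Longrightarrow> mpoly_in l (qf i) \<and> der_apply l \<delta> (a i) = lin_form l (a i) ^ m i * qf i"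
    by blast
  define F where "F t = (if t < l then \<delta> t else qf (t - l))" for t
  obtain N :: int where N: "N > 0" "\<forall>t\<in>{..<l+n}. \<forall>w\<in>Poly_Mapping.keys (F t). of_int N * Poly_Mapping.lookup (F t) w \<in> \<int>"
    using common_denom_family[of "{..<l+n}" F] by blast
  define \<delta>Z where "\<delta>Z j = (if j < l then intp N (\<delta> j) else 0)" for j
  define qZ where "qZ i = intp N (qf i)" for i
  have dZ: "(imap (\<delta>Z j) :: rat mpoly) = mconst (of_int N) * \<delta> j" for j
  proof (cases "j < l")
    case True
    then have "\<forall>w\<in>Poly_Mapping.keys (\<delta> j). of_int N * Poly_Mapping.lookup (\<delta> j) w \<in> \<int>"
      using bspec[OF N(2), of j] by (simp add: F_def)
    then show ?thesis using True by (simp add: \<delta>Z_def imap_intp)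
  next
    case False
    then show ?thesis using DmodD(2)[OF dQ, of j] by (simp add: \<delta>Z_def)
  qed
  have qZ: "(imap (qZ i) :: rat mpoly) = mconst (of_int N) * qf i" if "i < n" for i
  proof -
    have "l + i \<in> {..<l+n}" using that by simp
    then have "\<forall>w\<in>Poly_Mapping.keys (qf i). of_int N * Poly_Mapping.lookup (qf i) w \<in> \<int>"
      using bspec[OF N(2), of "l + i"] by (simp add: F_def)
    then show ?thesis by (simp add: qZ_def imap_intp)
  qed
  have "\<delta>Z \<in> DZ"
  proof (rule DmodI)
    show "mpoly_in l (\<delta>Z j)" if "j < l" for j
      using that DmodD(1)[OF dQ that] by (simp add: \<delta>Z_def) (rule mpoly_in_subset, assumption, rule keys_intp)
    show "\<delta>Z j = 0" if "l \<le> j" for j using that by (simp add: \<delta>Z_def)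
    fix i assume i: "i < n"
    have "(imap (der_apply l \<delta>Z (a i)) :: rat mpoly) = der_apply l (\<lambda>j. mconst (of_int N) * \<delta> j) (a i)"
      by (simp add: imap_der_apply dZ)
    also have "\<dots> = mconst (of_int N) * (lin_form l (a i) ^ m i * qf i)"
      using qf[OF i] by (simp add: der_apply_smult)
    also have "\<dots> = imap (lin_form l (a i) ^ m i * qZ i)"
      using qZ[OF i] by (simp add: imap_mult imap_pow imap_lin_form algebra_simps)
    finally have "der_apply l \<delta>Z (a i) = lin_form l (a i) ^ m i * qZ i" by (rule imap_inj_rat)
    moreover have "mpoly_in l (qZ i)" unfolding qZ_def using qf[OF i]
      by (auto intro: mpoly_in_subset[OF _ keys_intp])
    ultimately show "\<exists>q. mpoly_in l q \<and> der_apply l \<delta>Z (a i) = lin_form l (a i) ^ m i * q" by blast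
  qed
  then show ?thesis using N(1) dZ by blast
qed

lemma generate:
  assumes dQ: "\<delta> \<in> (Dmod l n a m :: (nat \<Rightarrow> rat mpoly) set)"
  shows "\<exists>g. (\<forall>s<l. mpoly_in l (g s)) \<and> (\<forall>s\<ge>l. g s = 0) \<and> \<delta> = (\<lambda>j. \<Sum>s<l. g s * imap (\<theta> s j))"
proof -
  obtain N :: int and \<delta>Z where N: "N > 0" "\<delta>Z \<in> DZ" "\<And>j. (imap (\<delta>Z j) :: rat mpoly) = mconst (of_int N) * \<delta> j"
    using clear_denoms[OF dQ] by blast
  define D where "D = mdeg ` (\<Union>j\<in>{..<l}. Poly_Mapping.keys (\<delta>Z j))"
  have finD: "finite D" unfolding D_def by auto
  have "\<forall>d\<in>D. \<exists>G. (\<forall>s<l. mpoly_in l (G s)) \<and> (\<forall>j. (imap (hc d (\<delta>Z j)) :: rat mpoly) = (\<Sum>s<l. G s * imap (\<theta> s j)))"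
  proof
    fix d assume "d \<in> D"
    have "(\<lambda>j. hc d (\<delta>Z j)) \<in> DZ" using N(2) by (rule Dmod_hc)
    moreover have "homog_der d (\<lambda>j. hc d (\<delta>Z j))" by (intro homog_derI homog_hc)
    ultimately show "\<exists>G. (\<forall>s<l. mpoly_in l (G s)) \<and> (\<forall>j. (imap (hc d (\<delta>Z j)) :: rat mpoly) = (\<Sum>s<l. G s * imap (\<theta> s j)))"
      by (rule homog_gen)
  qed
  from bchoice[OF this] obtain GG where GG0: "\<forall>d\<in>D. (\<forall>s<l. mpoly_in l (GG d s)) \<and> (\<forall>j. (imap (hc d (\<delta>Z j)) :: rat mpoly) = (\<Sum>s<l. GG d s * imap (\<theta> s j)))"
    by blast
  then have GG: "\<And>d. d \<in> D \<Longrightarrow> (\<forall>s<l. mpoly_in l (GG d s)) \<and> (\<forall>j. (imap (hc d (\<delta>Z j)) :: rat mpoly) = (\<Sum>s<l. GG d s * imap (\<theta> s j)))"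
    by blast
  have dec: "\<delta>Z j = (\<Sum>d\<in>D. hc d (\<delta>Z j))" for j
  proof (cases "j < l")
    case True
    then show ?thesis using finD by (intro hc_decomp) (auto simp: D_def)
  next
    case False
    then show ?thesis using DmodD(2)[OF N(2), of j] by simp
  qed
  have im: "(imap (\<delta>Z j) :: rat mpoly) = (\<Sum>s<l. (\<Sum>d\<in>D. GG d s) * imap (\<theta> s j))" for j
  proof -
    have "(imap (\<delta>Z j) :: rat mpoly) = (\<Sum>d\<in>D. imap (hc d (\<delta>Z j)))"
      by (subst dec) (simp add: imap_sum)
    also have "\<dots> = (\<Sum>d\<in>D. \<Sum>s<l. GG d s * imap (\<theta> s j))"
      by (rule sum.cong) (use GG in auto)
    also have "\<dots> = (\<Sum>s<l. (\<Sum>d\<in>D. GG d s) * imap (\<theta> s j))"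
      by (simp add: sum.swap[of _ D] sum_distrib_right)
    finally show ?thesis .
  qed
  define g where "g s = (if s < l then mconst (1 / of_int N) * (\<Sum>d\<in>D. GG d s) else 0)" for s
  have inv: "mconst (1 / of_int N) * mconst (of_int N) = (1 :: rat mpoly)"
    using N(1) by (simp add: mconst_mult[symmetric])
  have "\<delta> j = (\<Sum>s<l. g s * imap (\<theta> s j))" for j
  proof -
    have "\<delta> j = mconst (1 / of_int N) * (mconst (of_int N) * \<delta> j)"
      by (simp add: mult.assoc[symmetric] inv)
    also have "\<dots> = mconst (1 / of_int N) * (\<Sum>s<l. (\<Sum>d\<in>D. GG d s) * imap (\<theta> s j))"
      by (simp add: N(3)[symmetric] im)
    also have "\<dots> = (\<Sum>s<l. mconst (1 / of_int N) * ((\<Sum>d\<in>D. GG d s) * imap (\<theta> s j)))"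
      by (rule sum_distrib_left)
    also have "\<dots> = (\<Sum>s<l. g s * imap (\<theta> s j))"
      by (rule sum.cong) (simp_all add: g_def mult.assoc)
    finally show ?thesis .
  qed
  moreover have "mpoly_in l (g s)" if "s < l" for s
    using that GG by (auto simp: g_def intro!: mpoly_in_mult mpoly_in_mconst mpoly_in_sum)
  ultimately show ?thesis by (intro exI[of _ g]) (auto simp: g_def)
qed

lemma unique_int:
  assumes H: "\<forall>s<l. mpoly_in l (H s)" "\<forall>j. (\<Sum>s<l. H s * \<theta> s j) = 0"
  shows "\<forall>s<l. H s = 0"
proof -
  let ?P = "int CARD('p)"
  have ex: "\<exists>H'. (\<forall>s<l. mpoly_in l (H' s)) \<and> (\<forall>j. (\<Sum>s<l. H' s * \<theta> s j) = 0) \<and> (\<forall>s<l. H s = mconst (?P ^ k) * H' s)" for k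
  proof (induct k)
    case 0
    show ?case using H by (intro exI[of _ H]) simp
  next
    case (Suc k)
    then obtain H' where H': "\<forall>s<l. mpoly_in l (H' s)" "\<forall>j. (\<Sum>s<l. H' s * \<theta> s j) = 0"
      "\<forall>s<l. H s = mconst (?P ^ k) * H' s" by blast
    define g1 where "g1 s = (if s < l then (imap (H' s) :: 'p mod_ring mpoly) else 0)" for s
    have z: "(\<lambda>j. 0) \<in> (Dmod l n a m :: (nat \<Rightarrow> 'p mod_ring mpoly) set)" by (rule Dmod_zero)
    have p1: "(\<forall>s<l. mpoly_in l (g1 s)) \<and> (\<forall>s\<ge>l. g1 s = 0) \<and> (\<lambda>j. 0) = (\<lambda>j. \<Sum>s<l. g1 s * B s j)"
    proof (intro conjI allI impI)
      show "mpoly_in l (g1 s)" if "s < l" for s using that H'(1) by (simp add: g1_def mpoly_in_imap)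
      show "g1 s = 0" if "l \<le> s" for s using that by (simp add: g1_def)
      show "(\<lambda>j. 0) = (\<lambda>j. \<Sum>s<l. g1 s * B s j)"
      proof (rule ext)
        fix j
        have "(\<Sum>s<l. g1 s * B s j) = (imap (\<Sum>s<l. H' s * \<theta> s j) :: 'p mod_ring mpoly)"
          by (simp add: imap_sum imap_mult g1_def \<theta>_in)
        also have "\<dots> = 0" using H'(2) by simp
        finally show "0 = (\<Sum>s<l. g1 s * B s j)" by simp
      qed
    qed
    have p2: "(\<forall>s<l. mpoly_in l ((\<lambda>_. 0 :: 'p mod_ring mpoly) s)) \<and> (\<forall>s\<ge>l. (\<lambda>_. 0 :: 'p mod_ring mpoly) s = 0) \<and> (\<lambda>j. 0) = (\<lambda>j. \<Sum>s<l. (\<lambda>_. 0 :: 'p mod_ring mpoly) s * B s j)"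
      by simp
    have "g1 = (\<lambda>_. 0)"
      by (rule ex1_same[OF B_rep[OF z]]) (fact p1, fact p2)
    then have red0: "(imap (H' s) :: 'p mod_ring mpoly) = 0" if "s < l" for s
    proof -
      have "g1 s = 0" using \<open>g1 = (\<lambda>_. 0)\<close> by simp
      then show ?thesis using that unfolding g1_def by simp
    qed
    define H'' where "H'' s = divp ?P (H' s)" for s
    have H'eq: "H' s = mconst ?P * H'' s" if "s < l" for s
      unfolding H''_def using red0[OF that] by (rule imap_eq0_divp)
    have "mconst ?P * (\<Sum>s<l. H'' s * \<theta> s j) = 0" for j
    proof -
      have "mconst ?P * (\<Sum>s<l. H'' s * \<theta> s j) = (\<Sum>s<l. H' s * \<theta> s j)"
        by (simp add: sum_distrib_left H'eq mult.assoc)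
      then show ?thesis using H'(2) by simp
    qed
    then have "(\<Sum>s<l. H'' s * \<theta> s j) = 0" for j
      using mconst_nonzero[of ?P] P_ge2 by simp
    moreover have "mpoly_in l (H'' s)" if "s < l" for s
      unfolding H''_def using H'(1) that by (auto intro: mpoly_in_subset[OF _ keys_divp])
    moreover have "H s = mconst (?P ^ Suc k) * H'' s" if "s < l" for s
      using H'(3) that H'eq by (simp add: mconst_mult mult.assoc)
    ultimately show ?case by blast
  qed
  then have dv: "?P ^ k dvd Poly_Mapping.lookup (H s) u" if "s < l" for k s u
  proof -
    obtain H' where "\<forall>s<l. H s = mconst (?P ^ k) * H' s"
      using ex[of k] by blast
    then have "Poly_Mapping.lookup (H s) u = ?P ^ k * Poly_Mapping.lookup (H' s) u"
      using that by (simp add: mconst_mult_lookup)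
    then show ?thesis by simp
  qed
  show ?thesis
  proof (intro allI impI)
    fix s assume s: "s < l"
    show "H s = 0"
      by (rule poly_mapping_eqI) (simp add: all_powers_dvd[OF P_ge2 dv[OF s]])
  qed
qed


lemma unique_rat:
  fixes g g' :: "nat \<Rightarrow> rat mpoly"
  assumes g: "\<forall>s<l. mpoly_in l (g s)" "\<forall>s\<ge>l. g s = 0"
    and g': "\<forall>s<l. mpoly_in l (g' s)" "\<forall>s\<ge>l. g' s = 0"
    and eq: "(\<lambda>j. \<Sum>s<l. g s * imap (\<theta> s j)) = (\<lambda>j. \<Sum>s<l. g' s * imap (\<theta> s j))"
  shows "g = g'"
proof -
  define h where "h s = g s - g' s" for s
  have h0: "(\<Sum>s<l. h s * imap (\<theta> s j)) = (0 :: rat mpoly)" for j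
  proof -
    have "(\<Sum>s<l. g s * imap (\<theta> s j)) = (\<Sum>s<l. g' s * imap (\<theta> s j))"
      using fun_cong[OF eq, of j] by simp
    then show ?thesis by (simp add: h_def left_diff_distrib sum_subtractf)
  qed
  obtain N :: int where N: "N > 0" "\<forall>s\<in>{..<l}. \<forall>w\<in>Poly_Mapping.keys (h s). of_int N * Poly_Mapping.lookup (h s) w \<in> \<int>"
    using common_denom_family[of "{..<l}" h] by blast
  define H where "H s = intp N (h s)" for s
  have imH: "(imap (H s) :: rat mpoly) = mconst (of_int N) * h s" if "s < l" for s
    unfolding H_def using bspec[OF N(2), of s] that by (intro imap_intp) auto
  have hin: "mpoly_in l (h s)" if "s < l" for s using g(1) g'(1) that by (simp add: h_def mpoly_in_diff)
  have Hin: "\<forall>s<l. mpoly_in l (H s)"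
    using hin unfolding H_def by (auto intro: mpoly_in_subset[OF _ keys_intp])
  have "(\<Sum>s<l. H s * \<theta> s j) = 0" for j
  proof -
    have "(imap (\<Sum>s<l. H s * \<theta> s j) :: rat mpoly) = (\<Sum>s<l. mconst (of_int N) * h s * imap (\<theta> s j))"
      by (simp add: imap_sum imap_mult imH)
    also have "\<dots> = mconst (of_int N) * (\<Sum>s<l. h s * imap (\<theta> s j))"
      by (simp add: sum_distrib_left mult.assoc)
    also have "\<dots> = imap 0" using h0 by simp
    finally show ?thesis by (rule imap_inj_rat)
  qed
  then have "\<forall>s<l. H s = 0" using unique_int[OF Hin] by blast
  then have hz: "h s = 0" if "s < l" for s
    using imH[OF that] mconst_nonzero[of "of_int N :: rat"] N(1) that by simp
  show ?thesis
  proof (rule ext)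
    fix s
    show "g s = g' s"
    proof (cases "s < l")
      case True
      then show ?thesis using hz[OF True] by (simp add: h_def)
    next
      case False
      then show ?thesis using g(2) g'(2) by simp
    qed
  qed
qed

end

theorem main44:
  fixes l n :: nat
    and a :: "nat \<Rightarrow> nat \<Rightarrow> int"
    and m :: "nat \<Rightarrow> nat"
    and e :: "nat \<Rightarrow> nat"
  assumes primitive: "\<forall>i<n. \<forall>q::int. prime q \<longrightarrow> \<not> (\<forall>k<l. q dvd a i k)"
    and not_zd: "\<not> coker_zero_divisor l n a m (int CARD('p))"
    and free_p: "free_with_exponents l (Dmod l n a m :: (nat \<Rightarrow> 'p::prime_card mod_ring mpoly) set) e"
  shows "free_with_exponents l (Dmod l n a m :: (nat \<Rightarrow> rat mpoly) set) e"
proof -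
  interpret thm44 l n a m e "TYPE('p)"
    using primitive not_zd free_p by unfold_locales
  from free_p[unfolded free_with_exponents_def] obtain B :: "nat \<Rightarrow> nat \<Rightarrow> 'p mod_ring mpoly" where
    B: "(\<forall>s<l. B s \<in> Dmod l n a m \<and> homog_der (e s) (B s)) \<and>
    (\<forall>\<delta>\<in>Dmod l n a m. \<exists>!g. (\<forall>s<l. mpoly_in l (g s)) \<and> (\<forall>s\<ge>l. g s = 0) \<and> \<delta> = (\<lambda>j. \<Sum>s<l. g s * B s j))"
    by (rule exE)
  note B1 = conjunct1[OF B] and B2 = conjunct2[OF B]
  have "\<forall>s. \<exists>\<theta>. s < l \<longrightarrow> \<theta> \<in> DZ \<and> homog_der (e s) \<theta> \<and> (\<forall>j. (imap (\<theta> j) :: 'p mod_ring mpoly) = B s j)"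
  proof
    fix s
    show "\<exists>\<theta>. s < l \<longrightarrow> \<theta> \<in> DZ \<and> homog_der (e s) \<theta> \<and> (\<forall>j. (imap (\<theta> j) :: 'p mod_ring mpoly) = B s j)"
    proof (cases "s < l")
      case True
      have "B s \<in> Dmod l n a m" "homog_der (e s) (B s)" using B1 True by auto
      from lift_D_homog[OF this] show ?thesis by blast
    next
      case False
      then show ?thesis by blast
    qed
  qed
  then obtain \<theta> where \<theta>0: "\<forall>s. s < l \<longrightarrow> \<theta> s \<in> DZ \<and> homog_der (e s) (\<theta> s) \<and> (\<forall>j. (imap (\<theta> s j) :: 'p mod_ring mpoly) = B s j)"
    by (rule choice[THEN exE])
  interpret thm44b l n a m e "TYPE('p)" B \<theta>
  proof unfold_locales
    show "\<And>s. s < l \<Longrightarrow> B s \<in> Dmod l n a m \<and> homog_der (e s) (B s)" using B1 by simp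
    show "\<And>\<delta>. \<delta> \<in> Dmod l n a m \<Longrightarrow> \<exists>!g. (\<forall>s<l. mpoly_in l (g s)) \<and> (\<forall>s\<ge>l. g s = 0) \<and> \<delta> = (\<lambda>j. \<Sum>s<l. g s * B s j)"
      using B2 by (rule bspec)
    show "\<And>s. s < l \<Longrightarrow> \<theta> s \<in> DZ \<and> homog_der (e s) (\<theta> s) \<and> (\<forall>j. imap (\<theta> s j) = B s j)"
      using \<theta>0 by simp
  qed
  show ?thesis unfolding free_with_exponents_def
  proof (intro exI[of _ "\<lambda>s j. imap (\<theta> s j) :: rat mpoly"] conjI ballI allI impI)
    fix s assume s: "s < l"
    have ts: "\<theta> s \<in> DZ" "homog_der (e s) (\<theta> s)" using \<theta>_in[OF s] by simp_all
    show "(\<lambda>j. imap (\<theta> s j) :: rat mpoly) \<in> Dmod l n a m" by (rule Dmod_imap[OF ts(1)])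
    show "homog_der (e s) (\<lambda>j. imap (\<theta> s j) :: rat mpoly)"
      by (rule homog_derI, rule homog_imap, rule homog_derD[OF ts(2)])
  next
    fix \<delta> :: "nat \<Rightarrow> rat mpoly" assume d: "\<delta> \<in> Dmod l n a m"
    obtain g where g: "\<forall>s<l. mpoly_in l (g s)" "\<forall>s\<ge>l. g s = 0" "\<delta> = (\<lambda>j. \<Sum>s<l. g s * imap (\<theta> s j))"
      using generate[OF d] by blast
    show "\<exists>!g. (\<forall>s<l. mpoly_in l (g s)) \<and> (\<forall>s\<ge>l. g s = 0) \<and> \<delta> = (\<lambda>j. \<Sum>s<l. g s * imap (\<theta> s j))"
    proof (rule ex1I[of _ g])
      show "(\<forall>s<l. mpoly_in l (g s)) \<and> (\<forall>s\<ge>l. g s = 0) \<and> \<delta> = (\<lambda>j. \<Sum>s<l. g s * imap (\<theta> s j))"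
        by (intro conjI g(1) g(2) g(3))
      fix g' assume g': "(\<forall>s<l. mpoly_in l (g' s)) \<and> (\<forall>s\<ge>l. g' s = 0) \<and> \<delta> = (\<lambda>j. \<Sum>s<l. g' s * imap (\<theta> s j))"
      note g'c = conjunct1[OF g'] conjunct1[OF conjunct2[OF g']] conjunct2[OF conjunct2[OF g']]
      have "(\<lambda>j. \<Sum>s<l. g' s * imap (\<theta> s j)) = (\<lambda>j. \<Sum>s<l. g s * imap (\<theta> s j))"
        using trans[OF sym[OF g'c(3)] g(3)] .
      then show "g' = g" by (rule unique_rat[OF g'c(1) g'c(2) g(1) g(2)])
    qed
  qed
qed


theorem theorem4p4:
  fixes l n :: nat
    and a :: "nat \<Rightarrow> nat \<Rightarrow> int"
    and m :: "nat \<Rightarrow> nat"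
    and e :: "nat \<Rightarrow> nat"
  assumes distinct_hyps: "\<forall>i<n. \<forall>j<n. i \<noteq> j \<longrightarrow> hyperplane_Q l (a i) \<noteq> hyperplane_Q l (a j)"
    and primitive: "\<forall>i<n. \<forall>q::int. prime q \<longrightarrow> \<not> (\<forall>k<l. q dvd a i k)"
    and good: "\<forall>i<n. \<forall>j<n. i \<noteq> j \<longrightarrow>
               (lin_form l (a i) :: 'p::prime_card mod_ring mpoly) \<noteq> lin_form l (a j)"
    and not_zd: "\<not> coker_zero_divisor l n a m (int CARD('p))"
    and free_p: "free_with_exponents l (Dmod l n a m :: (nat \<Rightarrow> 'p mod_ring mpoly) set) e"
  shows "free_with_exponents l (Dmod l n a m :: (nat \<Rightarrow> rat mpoly) set) e"
  using main44[OF primitive not_zd free_p] .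

end
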